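(* Let $n\ge1$, $d\ge1$ be integers, let $p:\mathbb{R}^3\to\mathbb{C}$ be a homogeneous quadratic polynomial with $\tau(p)=0$ and $\kappa(p,p)=0$ (Euclidean Laplacian and conformality operator on $\mathbb{R}^3$), and let $P_d,Q_d:\mathbb{C}^n\to\mathbb{C}$ be linearly independent homogeneous holomorphic polynomials of degree $d$. On the Minkowski space $\mathbb{R}^{2n+3}_1$ with coordinates $(x_1,\dots,x_{2n+3})$ set $$z_1=x_4+ix_5,\ \dots,\ z_{n-1}=x_{2n}+ix_{2n+1},\ z_n=x_{2n+2}-x_{2n+3},$$ and define $$\hat\Phi^*_d(x)=\frac{p(x_1,x_2,x_3)^{d/2}+P_d(z_1,\dots,z_n)}{Q_d(z_1,\dots,z_n)}$$ on the open subset $V$ of $U^{2n+3}=\{x\in\mathbb{R}^{2n+3}_1:\langle x,x\rangle_L<0\}$ where $Q_d(z)\ne0$ (and, for $d$ odd, $p(x)\notin(-\infty,0]$, using the principal square root). Then $\hat\Phi^*_d$ is a harmonic morphism on $V$ with respect to the Lorentzian metric, it is invariant under $x\mapsto\lambda x$, $\lambda>0$, and the induced function $\Phi^*_d$ on $\pi^*(V)\subset H^{2n+2}$ (with $\Phi^*_d\circ\pi^*=\hat\Phi^*_d$, $\pi^*(x)=x/\sqrt{-\langle x,x\rangle_L}$) is a harmonic morphism on the hyperbolic space $H^{2n+2}$. Moreover, if $d$ is even and $Q_d(z)=z_n^d=(x_{2n+2}-x_{2n+3})^d$, then $Q_d$ has no zeros on $U^{2n+3}$, so $\hat\Phi^*_d$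 is defined on all of $U^{2n+3}$ and $\Phi^*_d$ on all of $H^{2n+2}$.
   Context: $\mathbb{R}^{m}_1$ is $\mathbb{R}^m$ with the Lorentzian metric $\langle x,y\rangle_L=-x_my_m+\sum_{k=1}^{m-1}x_ky_k$. For complex-valued functions on $\mathbb{R}^m_1$: $\tau(\phi)=-\partial^2\phi/\partial x_m^2+\sum_{k<m}\partial^2\phi/\partial x_k^2$ and $\kappa(\phi,\psi)=-\partial_m\phi\,\partial_m\psi+\sum_{k<m}\partial_k\phi\,\partial_k\psi$. $H^{2n+2}=\{x\in\mathbb{R}^{2n+3}_1:\langle x,x\rangle_L=-1\}$ with the induced (Riemannian) metric. A map $\phi$ from a semi-Riemannian manifold to $\mathbb{C}$ is a harmonic morphism if it pulls back local harmonic functions to harmonic functions; equivalently $\tau(\phi)=0$ and $\kappa(\phi,\phi)=0$ for the relevant metric. *)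

theory Defs
  imports "HOL-Analysis.Analysis"
begin

text \<open>Points of R^m are represented as functions nat => real, coordinates x 1, ..., x m
  (1-based as in the paper), all other coordinates being 0. Functions on R^m are
  complex-valued functions of such points.\<close>

definition supp_in :: "nat \<Rightarrow> (nat \<Rightarrow> real) \<Rightarrow> bool" where
  "supp_in m x \<longleftrightarrow> (\<forall>k. k \<notin> {1..m} \<longrightarrow> x k = 0)"

definition pd :: "nat \<Rightarrow> ((nat \<Rightarrow> real) \<Rightarrow> complex) \<Rightarrow> (nat \<Rightarrow> real) \<Rightarrow> complex" where
  "pd k f x = vector_derivative (\<lambda>t. f (x(k := t))) (at (x k))"

definition has_pd :: "nat \<Rightarrow> ((nat \<Rightarrow> real) \<Rightarrow> complex) \<Rightarrow> (nat \<Rightarrow> real) \<Rightarrow> bool" where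
  "has_pd k f x \<longleftrightarrow> (\<lambda>t. f (x(k := t))) differentiable (at (x k))"

definition twice_pd :: "nat \<Rightarrow> ((nat \<Rightarrow> real) \<Rightarrow> complex) \<Rightarrow> (nat \<Rightarrow> real) \<Rightarrow> bool" where
  "twice_pd m f x \<longleftrightarrow> (\<forall>k\<in>{1..m}. has_pd k f x \<and> (\<forall>j\<in>{1..m}. has_pd j (pd k f) x))"

definition lor :: "nat \<Rightarrow> (nat \<Rightarrow> real) \<Rightarrow> (nat \<Rightarrow> real) \<Rightarrow> real" where
  "lor m x y = - x m * y m + (\<Sum>k=1..m-1. x k * y k)"

definition tauL :: "nat \<Rightarrow> ((nat \<Rightarrow> real) \<Rightarrow> complex) \<Rightarrow> (nat \<Rightarrow> real) \<Rightarrow> complex" where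
  "tauL m f x = - pd m (pd m f) x + (\<Sum>k=1..m-1. pd k (pd k f) x)"

definition kappaL :: "nat \<Rightarrow> ((nat \<Rightarrow> real) \<Rightarrow> complex) \<Rightarrow> ((nat \<Rightarrow> real) \<Rightarrow> complex) \<Rightarrow> (nat \<Rightarrow> real) \<Rightarrow> complex" where
  "kappaL m f g x = - pd m f x * pd m g x + (\<Sum>k=1..m-1. pd k f x * pd k g x)"

definition tauE :: "nat \<Rightarrow> ((nat \<Rightarrow> real) \<Rightarrow> complex) \<Rightarrow> (nat \<Rightarrow> real) \<Rightarrow> complex" where
  "tauE m f x = (\<Sum>k=1..m. pd k (pd k f) x)"

definition kappaE :: "nat \<Rightarrow> ((nat \<Rightarrow> real) \<Rightarrow> complex) \<Rightarrow> ((nat \<Rightarrow> real) \<Rightarrow> complex) \<Rightarrow> (nat \<Rightarrow> real) \<Rightarrow> complex" where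
  "kappaE m f g x = (\<Sum>k=1..m. pd k f x * pd k g x)"

definition harmonic_morphism_L :: "nat \<Rightarrow> (nat \<Rightarrow> real) set \<Rightarrow> ((nat \<Rightarrow> real) \<Rightarrow> complex) \<Rightarrow> bool" where
  "harmonic_morphism_L m V f \<longleftrightarrow>
     (\<forall>x\<in>V. twice_pd m f x \<and> tauL m f x = 0 \<and> kappaL m f f x = 0)"

definition Uset :: "nat \<Rightarrow> (nat \<Rightarrow> real) set" where
  "Uset m = {x. supp_in m x \<and> lor m x x < 0}"

definition Hset :: "nat \<Rightarrow> (nat \<Rightarrow> real) set" where
  "Hset m = {x. supp_in m x \<and> lor m x x = -1}"

definition pistar :: "nat \<Rightarrow> (nat \<Rightarrow> real) \<Rightarrow> (nat \<Rightarrow> real)" where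
  "pistar m x = (\<lambda>k. x k / sqrt (- lor m x x))"

text \<open>Charts of the hyperboloid H^N in R^{N+1}_1 (two sheets, s = 1 or s = -1):
  y = (y_1..y_N) |-> (y_1, ..., y_N, s * sqrt(1 + |y|^2)).\<close>
definition hchart :: "nat \<Rightarrow> real \<Rightarrow> (nat \<Rightarrow> real) \<Rightarrow> (nat \<Rightarrow> real)" where
  "hchart N s y = (\<lambda>k. if k \<in> {1..N} then y k
                       else if k = N + 1 then s * sqrt (1 + (\<Sum>i=1..N. (y i)\<^sup>2)) else 0)"

definition hmetric :: "nat \<Rightarrow> (nat \<Rightarrow> real) \<Rightarrow> nat \<Rightarrow> nat \<Rightarrow> real" where
  "hmetric N y i j = (if i = j then 1 else 0) - y i * y j / (1 + (\<Sum>l=1..N. (y l)\<^sup>2))"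

definition hmetric_inv :: "nat \<Rightarrow> (nat \<Rightarrow> real) \<Rightarrow> nat \<Rightarrow> nat \<Rightarrow> real" where
  "hmetric_inv N y i j = (if i = j then 1 else 0) + y i * y j"

definition hsqrtdet :: "nat \<Rightarrow> (nat \<Rightarrow> real) \<Rightarrow> real" where
  "hsqrtdet N y = 1 / sqrt (1 + (\<Sum>l=1..N. (y l)\<^sup>2))"

definition tauH :: "nat \<Rightarrow> ((nat \<Rightarrow> real) \<Rightarrow> complex) \<Rightarrow> (nat \<Rightarrow> real) \<Rightarrow> complex" where
  "tauH N f y = (1 / complex_of_real (hsqrtdet N y)) *
     (\<Sum>i=1..N. pd i (\<lambda>w. complex_of_real (hsqrtdet N w) *
                          (\<Sum>j=1..N. complex_of_real (hmetric_inv N w i j) * pd j f w)) y)"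

definition kappaH :: "nat \<Rightarrow> ((nat \<Rightarrow> real) \<Rightarrow> complex) \<Rightarrow> ((nat \<Rightarrow> real) \<Rightarrow> complex) \<Rightarrow> (nat \<Rightarrow> real) \<Rightarrow> complex" where
  "kappaH N f g y = (\<Sum>i=1..N. \<Sum>j=1..N. complex_of_real (hmetric_inv N y i j) * pd i f y * pd j g y)"

definition harmonic_morphism_H :: "nat \<Rightarrow> (nat \<Rightarrow> real) set \<Rightarrow> ((nat \<Rightarrow> real) \<Rightarrow> complex) \<Rightarrow> bool" where
  "harmonic_morphism_H N W f \<longleftrightarrow>
     (\<forall>s\<in>{1, -1}. \<forall>y. supp_in N y \<and> hchart N s y \<in> W \<longrightarrow>
        twice_pd N (f \<circ> hchart N s) y \<and> tauH N (f \<circ> hchart N s) y = 0 \<and>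
        kappaH N (f \<circ> hchart N s) (f \<circ> hchart N s) y = 0)"

definition quad3 :: "(nat \<Rightarrow> nat \<Rightarrow> complex) \<Rightarrow> (nat \<Rightarrow> real) \<Rightarrow> complex" where
  "quad3 a x = (\<Sum>i=1..3. \<Sum>j=1..3. a i j * complex_of_real (x i) * complex_of_real (x j))"

definition exps :: "nat \<Rightarrow> nat \<Rightarrow> (nat \<Rightarrow> nat) set" where
  "exps n d = {\<alpha>. (\<forall>k. k \<notin> {1..n} \<longrightarrow> \<alpha> k = 0) \<and> (\<Sum>k=1..n. \<alpha> k) = d}"

definition hpoly :: "nat \<Rightarrow> nat \<Rightarrow> ((nat \<Rightarrow> nat) \<Rightarrow> complex) \<Rightarrow> (nat \<Rightarrow> complex) \<Rightarrow> complex" where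
  "hpoly n d c z = (\<Sum>\<alpha>\<in>exps n d. c \<alpha> * (\<Prod>k=1..n. z k ^ \<alpha> k))"

definition zmap :: "nat \<Rightarrow> (nat \<Rightarrow> real) \<Rightarrow> (nat \<Rightarrow> complex)" where
  "zmap n x = (\<lambda>k. if 1 \<le> k \<and> k \<le> n - 1 then Complex (x (2*k+2)) (x (2*k+3))
                   else if k = n then complex_of_real (x (2*n+2) - x (2*n+3)) else 0)"

definition half_pow :: "complex \<Rightarrow> nat \<Rightarrow> complex" where
  "half_pow w d = (if even d then w ^ (d div 2) else (csqrt w) ^ d)"

definition PhiHat :: "nat \<Rightarrow> nat \<Rightarrow> (nat \<Rightarrow> nat \<Rightarrow> complex) \<Rightarrow> ((nat \<Rightarrow> nat) \<Rightarrow> complex)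
                       \<Rightarrow> ((nat \<Rightarrow> nat) \<Rightarrow> complex) \<Rightarrow> (nat \<Rightarrow> real) \<Rightarrow> complex" where
  "PhiHat n d a cP cQ x =
     (half_pow (quad3 a x) d + hpoly n d cP (zmap n x)) / hpoly n d cQ (zmap n x)"

definition Vset :: "nat \<Rightarrow> nat \<Rightarrow> (nat \<Rightarrow> nat \<Rightarrow> complex) \<Rightarrow> ((nat \<Rightarrow> nat) \<Rightarrow> complex)
                      \<Rightarrow> (nat \<Rightarrow> real) set" where
  "Vset n d a cQ = {x \<in> Uset (2*n+3). hpoly n d cQ (zmap n x) \<noteq> 0 \<and>
       (odd d \<longrightarrow> quad3 a x \<notin> complex_of_real ` {t. t \<le> 0})}"

end

theory Submission
  imports Defs
begin

definition cd :: "nat \<Rightarrow> (real \<Rightarrow> nat \<Rightarrow> real) \<Rightarrow> (nat \<Rightarrow> real) \<Rightarrow> real \<Rightarrow> bool" where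
  "cd m \<gamma> \<gamma>' t \<longleftrightarrow> (\<forall>k\<in>{1..m}. ((\<lambda>s. \<gamma> s k) has_real_derivative \<gamma>' k) (at t))"

definition dat :: "nat \<Rightarrow> ((nat\<Rightarrow>real)\<Rightarrow>complex) \<Rightarrow> (nat \<Rightarrow> complex) \<Rightarrow> (nat\<Rightarrow>real) \<Rightarrow> bool" where
  "dat m f D x \<longleftrightarrow> (\<forall>\<gamma> \<gamma>' t. cd m \<gamma> \<gamma>' t \<longrightarrow> \<gamma> t = x \<longrightarrow>
     ((\<lambda>s. f (\<gamma> s)) has_vector_derivative (\<Sum>k=1..m. D k * complex_of_real (\<gamma>' k))) (at t))"

lemma sum_delta_mult: "finite A \<Longrightarrow> (\<Sum>j\<in>A. (if j = k then 1 else 0) * (c j::complex)) = (if k\<in>A then c k else 0)"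
proof -
  assume "finite A"
  have "(\<Sum>j\<in>A. (if j = k then 1 else 0) * c j) = (\<Sum>j\<in>A. if j = k then c j else 0)"
    by (rule sum.cong) auto
  then show ?thesis using \<open>finite A\<close> by (simp add: sum.delta)
qed

lemma dat_const: "dat m (\<lambda>x. c) (\<lambda>k. 0) x"
  by (simp add: dat_def)

lemma dat_coord: assumes "k \<in> {1..m}"
  shows "dat m (\<lambda>x. complex_of_real (x k)) (\<lambda>j. if j = k then 1 else 0) x"
  unfolding dat_def
proof (intro allI impI)
  fix \<gamma> \<gamma>' t assume "cd m \<gamma> \<gamma>' t" "\<gamma> t = x"
  then have "((\<lambda>s. \<gamma> s k) has_real_derivative \<gamma>' k) (at t)" using assms by (auto simp: cd_def)
  then have "((\<lambda>s. complex_of_real (\<gamma> s k)) has_vector_derivative of_real (\<gamma>' k)) (at t)"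
    by (rule has_vector_derivative_of_real)
  moreover have "(\<Sum>j=1..m. (if j = k then 1 else 0) * complex_of_real (\<gamma>' j)) = of_real (\<gamma>' k)"
    using assms by (simp add: sum_delta_mult)
  ultimately show "((\<lambda>s. complex_of_real (\<gamma> s k)) has_vector_derivative
      (\<Sum>j=1..m. (if j = k then 1 else 0) * complex_of_real (\<gamma>' j))) (at t)" by simp
qed

lemma dat_add: "dat m f Df x \<Longrightarrow> dat m g Dg x \<Longrightarrow> dat m (\<lambda>x. f x + g x) (\<lambda>k. Df k + Dg k) x"
  unfolding dat_def
  by (auto simp: distrib_right sum.distrib intro!: has_vector_derivative_add)

lemma dat_mult: "dat m f Df x \<Longrightarrow> dat m g Dg x \<Longrightarrow> dat m (\<lambda>x. f x * g x) (\<lambda>k. Df k * g x + f x * Dg k) x"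
  unfolding dat_def
proof (intro allI impI)
  fix \<gamma> \<gamma>' t assume f: "\<forall>\<gamma> \<gamma>' t. cd m \<gamma> \<gamma>' t \<longrightarrow> \<gamma> t = x \<longrightarrow>
     ((\<lambda>s. f (\<gamma> s)) has_vector_derivative (\<Sum>k=1..m. Df k * complex_of_real (\<gamma>' k))) (at t)"
   and g: "\<forall>\<gamma> \<gamma>' t. cd m \<gamma> \<gamma>' t \<longrightarrow> \<gamma> t = x \<longrightarrow>
     ((\<lambda>s. g (\<gamma> s)) has_vector_derivative (\<Sum>k=1..m. Dg k * complex_of_real (\<gamma>' k))) (at t)"
   and c: "cd m \<gamma> \<gamma>' t" "\<gamma> t = x"
  have "((\<lambda>s. f (\<gamma> s) * g (\<gamma> s)) has_vector_derivative
     (f (\<gamma> t) * (\<Sum>k=1..m. Dg k * complex_of_real (\<gamma>' k)) + (\<Sum>k=1..m. Df k * complex_of_real (\<gamma>' k)) * g (\<gamma> t))) (at t)"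
    using f g c by (intro has_vector_derivative_mult) auto
  then show "((\<lambda>s. f (\<gamma> s) * g (\<gamma> s)) has_vector_derivative
     (\<Sum>k=1..m. (Df k * g x + f x * Dg k) * complex_of_real (\<gamma>' k))) (at t)"
    using c by (simp add: sum_distrib_left sum_distrib_right sum.distrib algebra_simps)
qed

lemma dat_comp: "dat m f Df x \<Longrightarrow> (\<phi> has_field_derivative d) (at (f x)) \<Longrightarrow> dat m (\<lambda>x. \<phi> (f x)) (\<lambda>k. d * Df k) x"
  unfolding dat_def
proof (intro allI impI)
  fix \<gamma> \<gamma>' t assume f: "\<forall>\<gamma> \<gamma>' t. cd m \<gamma> \<gamma>' t \<longrightarrow> \<gamma> t = x \<longrightarrow>
     ((\<lambda>s. f (\<gamma> s)) has_vector_derivative (\<Sum>k=1..m. Df k * complex_of_real (\<gamma>' k))) (at t)"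
   and p: "(\<phi> has_field_derivative d) (at (f x))" and c: "cd m \<gamma> \<gamma>' t" "\<gamma> t = x"
  have "((\<phi> \<circ> (\<lambda>s. f (\<gamma> s))) has_vector_derivative ((\<Sum>k=1..m. Df k * complex_of_real (\<gamma>' k)) * d)) (at t)"
    using f c p by (intro field_vector_diff_chain_at) auto
  then show "((\<lambda>s. \<phi> (f (\<gamma> s))) has_vector_derivative (\<Sum>k=1..m. d * Df k * complex_of_real (\<gamma>' k))) (at t)"
    by (simp add: o_def sum_distrib_left sum_distrib_right algebra_simps)
qed

lemma dat_sum: "finite I \<Longrightarrow> (\<And>i. i \<in> I \<Longrightarrow> dat m (f i) (Df i) x) \<Longrightarrow>
   dat m (\<lambda>x. \<Sum>i\<in>I. f i x) (\<lambda>k. \<Sum>i\<in>I. Df i k) x"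
  unfolding dat_def
  by (auto simp: sum_distrib_right intro!: has_vector_derivative_sum) (subst sum.swap, auto intro!: has_vector_derivative_sum)

lemma dat_eqD: "dat m f D x \<Longrightarrow> (\<And>k. D k = D' k) \<Longrightarrow> dat m f D' x"
proof -
  assume "dat m f D x" "\<And>k. D k = D' k"
  then have "D = D'" by auto
  with \<open>dat m f D x\<close> show ?thesis by simp
qed

definition C2 :: "nat \<Rightarrow> (nat\<Rightarrow>real) set \<Rightarrow> ((nat\<Rightarrow>real)\<Rightarrow>complex) \<Rightarrow> (nat \<Rightarrow> (nat\<Rightarrow>real)\<Rightarrow>complex)
   \<Rightarrow> (nat \<Rightarrow> nat \<Rightarrow> (nat\<Rightarrow>real)\<Rightarrow>complex) \<Rightarrow> bool" where
  "C2 m V f Df DDf \<longleftrightarrow> (\<forall>x\<in>V. dat m f (\<lambda>k. Df k x) x \<and> (\<forall>k. dat m (Df k) (\<lambda>j. DDf k j x) x)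
       \<and> (\<forall>k j. DDf k j x = DDf j k x))"

lemma C2_restrict: "C2 m V f Df DDf \<Longrightarrow> W \<subseteq> V \<Longrightarrow> C2 m W f Df DDf"
  unfolding C2_def by blast

lemma C2_const: "C2 m V (\<lambda>x. c) (\<lambda>k x. 0) (\<lambda>k j x. 0)"
  unfolding C2_def by (simp add: dat_const)

lemma C2_coord: "k \<in> {1..m} \<Longrightarrow> C2 m V (\<lambda>x. complex_of_real (x k)) (\<lambda>j x. if j = k then 1 else 0) (\<lambda>i j x. 0)"
  unfolding C2_def using dat_coord[of k m] dat_const by (auto intro: dat_eqD[OF dat_const])

lemma C2_add: "C2 m V f Df DDf \<Longrightarrow> C2 m V g Dg DDg \<Longrightarrow>
  C2 m V (\<lambda>x. f x + g x) (\<lambda>k x. Df k x + Dg k x) (\<lambda>k j x. DDf k j x + DDg k j x)"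
  unfolding C2_def by (auto intro!: dat_add)

lemma C2_mult: "C2 m V f Df DDf \<Longrightarrow> C2 m V g Dg DDg \<Longrightarrow>
  C2 m V (\<lambda>x. f x * g x) (\<lambda>k x. Df k x * g x + f x * Dg k x)
    (\<lambda>k j x. DDf k j x * g x + Df k x * Dg j x + Df j x * Dg k x + f x * DDg k j x)"
  unfolding C2_def
proof (intro ballI conjI allI)
  fix x k j
  assume f: "\<forall>x\<in>V. dat m f (\<lambda>k. Df k x) x \<and> (\<forall>k. dat m (Df k) (\<lambda>j. DDf k j x) x) \<and> (\<forall>k j. DDf k j x = DDf j k x)"
    and g: "\<forall>x\<in>V. dat m g (\<lambda>k. Dg k x) x \<and> (\<forall>k. dat m (Dg k) (\<lambda>j. DDg k j x) x) \<and> (\<forall>k j. DDg k j x = DDg j k x)"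
    and x: "x \<in> V"
  have f1: "dat m f (\<lambda>k. Df k x) x" and f2: "dat m (Df k) (\<lambda>j. DDf k j x) x"
    and f3: "\<forall>k j. DDf k j x = DDf j k x" using f x by blast+
  have g1: "dat m g (\<lambda>k. Dg k x) x" and g2: "dat m (Dg k) (\<lambda>j. DDg k j x) x"
    and g3: "\<forall>k j. DDg k j x = DDg j k x" using g x by blast+
  show "dat m (\<lambda>x. f x * g x) (\<lambda>k. Df k x * g x + f x * Dg k x) x"
    using dat_mult[OF f1 g1] .
  show "DDf k j x * g x + Df k x * Dg j x + Df j x * Dg k x + f x * DDg k j x =
        DDf j k x * g x + Df j x * Dg k x + Df k x * Dg j x + f x * DDg j k x"
    using f3 g3 by auto
  have "dat m (\<lambda>x. Df k x * g x + f x * Dg k x)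
     (\<lambda>j. (DDf k j x * g x + Df k x * Dg j x) + (Df j x * Dg k x + f x * DDg k j x)) x"
    by (rule dat_add[OF dat_mult[OF f2 g1] dat_mult[OF f1 g2]])
  then show "dat m (\<lambda>x. Df k x * g x + f x * Dg k x)
     (\<lambda>j. DDf k j x * g x + Df k x * Dg j x + Df j x * Dg k x + f x * DDg k j x) x"
    by (rule dat_eqD) (simp add: algebra_simps)
qed

lemma C2_comp: "C2 m V f Df DDf \<Longrightarrow>
  (\<And>x. x \<in> V \<Longrightarrow> (\<phi> has_field_derivative \<phi>1 (f x)) (at (f x)) \<and> (\<phi>1 has_field_derivative \<phi>2 (f x)) (at (f x))) \<Longrightarrow>
  C2 m V (\<lambda>x. \<phi> (f x)) (\<lambda>k x. \<phi>1 (f x) * Df k x) (\<lambda>k j x. \<phi>2 (f x) * Df j x * Df k x + \<phi>1 (f x) * DDf k j x)"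
  unfolding C2_def
proof (intro ballI conjI allI)
  fix x k j
  assume f: "\<forall>x\<in>V. dat m f (\<lambda>k. Df k x) x \<and> (\<forall>k. dat m (Df k) (\<lambda>j. DDf k j x) x) \<and> (\<forall>k j. DDf k j x = DDf j k x)"
    and p: "\<And>x. x \<in> V \<Longrightarrow> (\<phi> has_field_derivative \<phi>1 (f x)) (at (f x)) \<and> (\<phi>1 has_field_derivative \<phi>2 (f x)) (at (f x))"
    and x: "x \<in> V"
  have f1: "dat m f (\<lambda>k. Df k x) x" and f2: "dat m (Df k) (\<lambda>j. DDf k j x) x"
    and f3: "\<forall>k j. DDf k j x = DDf j k x" using f x by blast+
  have p1: "(\<phi> has_field_derivative \<phi>1 (f x)) (at (f x))" and p2: "(\<phi>1 has_field_derivative \<phi>2 (f x)) (at (f x))"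
    using p x by auto
  show "dat m (\<lambda>x. \<phi> (f x)) (\<lambda>k. \<phi>1 (f x) * Df k x) x"
    using dat_comp[OF f1 p1] .
  show "\<phi>2 (f x) * Df j x * Df k x + \<phi>1 (f x) * DDf k j x = \<phi>2 (f x) * Df k x * Df j x + \<phi>1 (f x) * DDf j k x"
    using f3 by auto
  have "dat m (\<lambda>x. \<phi>1 (f x) * Df k x) (\<lambda>j. (\<phi>2 (f x) * Df j x) * Df k x + \<phi>1 (f x) * DDf k j x) x"
    by (rule dat_mult[OF dat_comp[OF f1 p2] f2])
  then show "dat m (\<lambda>x. \<phi>1 (f x) * Df k x) (\<lambda>j. \<phi>2 (f x) * Df j x * Df k x + \<phi>1 (f x) * DDf k j x) x"
    by simp
qed

lemma C2_sum: "finite I \<Longrightarrow> (\<And>i. i \<in> I \<Longrightarrow> C2 m V (f i) (Df i) (DDf i)) \<Longrightarrow>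
  C2 m V (\<lambda>x. \<Sum>i\<in>I. f i x) (\<lambda>k x. \<Sum>i\<in>I. Df i k x) (\<lambda>k j x. \<Sum>i\<in>I. DDf i k j x)"
  unfolding C2_def by (auto intro!: dat_sum sum.cong)

definition linR :: "((nat \<Rightarrow> complex) \<Rightarrow> bool) \<Rightarrow> bool" where
  "linR R \<longleftrightarrow> R (\<lambda>k. 0) \<and> (\<forall>u v. R u \<longrightarrow> R v \<longrightarrow> R (\<lambda>k. u k + v k)) \<and> (\<forall>c u. R u \<longrightarrow> R (\<lambda>k. c * u k))"

lemma linR_0: "linR R \<Longrightarrow> R (\<lambda>k. 0)" by (simp add: linR_def)
lemma linR_add: "linR R \<Longrightarrow> R u \<Longrightarrow> R v \<Longrightarrow> R (\<lambda>k. u k + v k)" by (simp add: linR_def)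
lemma linR_cmult: "linR R \<Longrightarrow> R u \<Longrightarrow> R (\<lambda>k. c * u k)" by (simp add: linR_def)
lemma linR_multc: "linR R \<Longrightarrow> R u \<Longrightarrow> R (\<lambda>k. u k * c)"
  using linR_cmult[of R u c] by (simp add: mult.commute)
lemma linR_sum: assumes "linR R" shows "finite I \<Longrightarrow> (\<And>i. i \<in> I \<Longrightarrow> R (u i)) \<Longrightarrow> R (\<lambda>k. \<Sum>i\<in>I. u i k)"
  by (induct I rule: finite_induct) (auto intro: linR_0[OF assms] linR_add[OF assms])

lemma linR_2: "linR R \<Longrightarrow> R u \<Longrightarrow> R v \<Longrightarrow> R (\<lambda>k. u k * a + b * v k)"
  using linR_add[of R "\<lambda>k. u k * a" "\<lambda>k. b * v k"] linR_multc[of R u a] linR_cmult[of R v b] by simp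
lemma linR_4: "linR R \<Longrightarrow> R u1 \<Longrightarrow> R u2 \<Longrightarrow> R u3 \<Longrightarrow> R u4 \<Longrightarrow>
   R (\<lambda>j. u1 j * a + b * u2 j + u3 j * c + e * u4 j)"
proof -
  assume R: "linR R" and u: "R u1" "R u2" "R u3" "R u4"
  have "R (\<lambda>j. u1 j * a + b * u2 j)" using linR_2[OF R u(1,2)] .
  moreover have "R (\<lambda>j. u3 j * c + e * u4 j)" using linR_2[OF R u(3,4)] .
  ultimately have "R (\<lambda>j. (u1 j * a + b * u2 j) + (u3 j * c + e * u4 j))"
    using linR_add[OF R] by blast
  then show ?thesis by (simp add: add.assoc)
qed
lemma linR_c2: "linR R \<Longrightarrow> R u \<Longrightarrow> R v \<Longrightarrow> R (\<lambda>j. a * u j * b + c * v j)"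
  using linR_2[of R u v "a*b" c] by (simp add: ac_simps)

definition C2R :: "nat \<Rightarrow> (nat\<Rightarrow>real) set \<Rightarrow> ((nat \<Rightarrow> complex) \<Rightarrow> bool) \<Rightarrow> ((nat\<Rightarrow>real)\<Rightarrow>complex) \<Rightarrow> bool" where
  "C2R m V R f \<longleftrightarrow> (\<exists>Df DDf. C2 m V f Df DDf \<and> (\<forall>x\<in>V. R (\<lambda>k. Df k x) \<and> (\<forall>k. R (\<lambda>j. DDf k j x))))"

lemma C2R_restrict: "C2R m V R f \<Longrightarrow> W \<subseteq> V \<Longrightarrow> C2R m W R f"
  unfolding C2R_def using C2_restrict by blast

lemma C2R_const: "linR R \<Longrightarrow> C2R m V R (\<lambda>x. c)"
  unfolding C2R_def using C2_const linR_0 by blast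

lemma C2R_add: assumes R: "linR R" and f: "C2R m V R f" and g: "C2R m V R g"
  shows "C2R m V R (\<lambda>x. f x + g x)"
proof -
  obtain Df DDf where f1: "C2 m V f Df DDf" and f2: "\<forall>x\<in>V. R (\<lambda>k. Df k x) \<and> (\<forall>k. R (\<lambda>j. DDf k j x))"
    using f unfolding C2R_def by blast
  obtain Dg DDg where g1: "C2 m V g Dg DDg" and g2: "\<forall>x\<in>V. R (\<lambda>k. Dg k x) \<and> (\<forall>k. R (\<lambda>j. DDg k j x))"
    using g unfolding C2R_def by blast
  show ?thesis unfolding C2R_def
    apply (rule exI, rule exI, rule conjI, rule C2_add[OF f1 g1])
    using f2 g2 by (simp add: linR_add[OF R])
qed

lemma C2R_mult: assumes R: "linR R" and f: "C2R m V R f" and g: "C2R m V R g"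
  shows "C2R m V R (\<lambda>x. f x * g x)"
proof -
  obtain Df DDf where f1: "C2 m V f Df DDf" and f2: "\<forall>x\<in>V. R (\<lambda>k. Df k x) \<and> (\<forall>k. R (\<lambda>j. DDf k j x))"
    using f unfolding C2R_def by blast
  obtain Dg DDg where g1: "C2 m V g Dg DDg" and g2: "\<forall>x\<in>V. R (\<lambda>k. Dg k x) \<and> (\<forall>k. R (\<lambda>j. DDg k j x))"
    using g unfolding C2R_def by blast
  show ?thesis unfolding C2R_def
    apply (rule exI, rule exI, rule conjI, rule C2_mult[OF f1 g1])
    using f2 g2 by (simp add: linR_2[OF R] linR_4[OF R])
qed

lemma C2R_comp: assumes R: "linR R" and f: "C2R m V R f"
  and p: "\<And>x. x \<in> V \<Longrightarrow> (\<phi> has_field_derivative \<phi>1 (f x)) (at (f x)) \<and> (\<phi>1 has_field_derivative \<phi>2 (f x)) (at (f x))"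
  shows "C2R m V R (\<lambda>x. \<phi> (f x))"
proof -
  obtain Df DDf where f1: "C2 m V f Df DDf" and f2: "\<forall>x\<in>V. R (\<lambda>k. Df k x) \<and> (\<forall>k. R (\<lambda>j. DDf k j x))"
    using f unfolding C2R_def by blast
  show ?thesis unfolding C2R_def
    apply (rule exI, rule exI, rule conjI, rule C2_comp[OF f1 p], assumption)
    using f2 by (simp add: linR_cmult[OF R] linR_c2[OF R])
qed

lemma C2R_sum: assumes "linR R" shows "finite I \<Longrightarrow> (\<And>i. i \<in> I \<Longrightarrow> C2R m V R (f i)) \<Longrightarrow> C2R m V R (\<lambda>x. \<Sum>i\<in>I. f i x)"
  by (induct I rule: finite_induct) (auto intro: C2R_add[OF assms] C2R_const[OF assms])

lemma C2R_prod: assumes "linR R" shows "finite I \<Longrightarrow> (\<And>i. i \<in> I \<Longrightarrow> C2R m V R (f i)) \<Longrightarrow> C2R m V R (\<lambda>x. \<Prod>i\<in>I. f i x)"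
  by (induct I rule: finite_induct) (auto intro: C2R_mult[OF assms] C2R_const[OF assms])

lemma C2R_power: "linR R \<Longrightarrow> C2R m V R f \<Longrightarrow> C2R m V R (\<lambda>x. f x ^ e)"
  using C2R_prod[of R "{..<e}" m V "\<lambda>i. f"] by simp

lemma cd_line: "cd m (\<lambda>t. x(k:=t)) (\<lambda>j. if j = k then 1 else 0) s"
  unfolding cd_def
proof
  fix j assume "j \<in> {1..m}"
  show "((\<lambda>t. (x(k := t)) j) has_real_derivative (if j = k then 1 else 0)) (at s)"
    by (cases "j = k") auto
qed

lemma pd_dat: assumes "dat m f D x" "k \<in> {1..m}"
  shows "((\<lambda>t. f (x(k:=t))) has_vector_derivative D k) (at (x k))"
proof -
  have "((\<lambda>t. f (x(k:=t))) has_vector_derivative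
      (\<Sum>j=1..m. D j * complex_of_real (if j = k then 1 else 0))) (at (x k))"
    using assms(1) cd_line[of m x k "x k"] unfolding dat_def by auto
  moreover have "(\<Sum>j=1..m. D j * complex_of_real (if j = k then 1 else 0)) = D k"
  proof -
    have "(\<Sum>j=1..m. D j * complex_of_real (if j = k then 1 else 0)) = (\<Sum>j=1..m. if j = k then D j else 0)"
      by (rule sum.cong) auto
    then show ?thesis using assms(2) by simp
  qed
  ultimately show ?thesis by simp
qed

lemma pd_eq: "dat m f D x \<Longrightarrow> k \<in> {1..m} \<Longrightarrow> pd k f x = D k"
  unfolding pd_def by (rule vector_derivative_at, rule pd_dat)

lemma has_pd_dat: "dat m f D x \<Longrightarrow> k \<in> {1..m} \<Longrightarrow> has_pd k f x"
  unfolding has_pd_def by (rule differentiableI_vector, rule pd_dat)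

lemma second_pd:
  assumes C: "C2 m V f Df DDf" and x: "x \<in> V" and k: "k \<in> {1..m}" and j: "j \<in> {1..m}"
    and ev: "eventually (\<lambda>s. x(j:=s) \<in> V) (nhds (x j))"
  shows "((\<lambda>t. pd k f (x(j:=t))) has_vector_derivative DDf k j x) (at (x j))"
proof -
  obtain e where e: "e > 0" "\<And>s. dist s (x j) < e \<Longrightarrow> x(j:=s) \<in> V"
    using ev unfolding eventually_nhds_metric by blast
  have "dat m (Df k) (\<lambda>j. DDf k j x) x" using C x unfolding C2_def by blast
  from pd_dat[OF this j]
  have d: "((\<lambda>t. Df k (x(j:=t))) has_vector_derivative DDf k j x) (at (x j))" .
  show ?thesis
  proof (rule has_vector_derivative_transform_within[OF _ e(1), where S=UNIV, simplified])
    show "((\<lambda>t. Df k (x(j:=t))) has_vector_derivative DDf k j x) (at (x j))" by (rule d)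
    fix s assume "dist s (x j) < e"
    then have "x(j:=s) \<in> V" by (rule e(2))
    then have "dat m f (\<lambda>k. Df k (x(j:=s))) (x(j:=s))" using C unfolding C2_def by blast
    then show "Df k (x(j:=s)) = pd k f (x(j:=s))" using pd_eq k by force
  qed
qed

definition kapv :: "nat \<Rightarrow> (nat \<Rightarrow> complex) \<Rightarrow> (nat \<Rightarrow> complex) \<Rightarrow> complex" where
  "kapv m u v = - u m * v m + (\<Sum>k=1..m-1. u k * v k)"

definition tauv :: "nat \<Rightarrow> (nat \<Rightarrow> nat \<Rightarrow> complex) \<Rightarrow> complex" where
  "tauv m M = - M m m + (\<Sum>k=1..m-1. M k k)"

lemma kapv_comp: "kapv m (\<lambda>k. c * u k) (\<lambda>k. c * u k) = c^2 * kapv m u u"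
  by (simp add: kapv_def sum_distrib_left power2_eq_square algebra_simps)

lemma tauv_comp: "tauv m (\<lambda>k j. a * u j * u k + c * M k j) = a * kapv m u u + c * tauv m M"
  by (simp add: kapv_def tauv_def sum.distrib sum_distrib_left algebra_simps)

lemma kapv_split: "kapv m (\<lambda>k. u k * c + h k) (\<lambda>k. u k * c + h k) =
   c^2 * kapv m u u + 2 * c * kapv m u h + kapv m h h"
  by (simp add: kapv_def sum.distrib sum_distrib_left power2_eq_square algebra_simps)

lemma tauv_split: "tauv m (\<lambda>k j. M1 k j * r + u k * v j + u j * v k + b * M2 k j + M3 k j) =
   r * tauv m M1 + 2 * kapv m u v + b * tauv m M2 + tauv m M3"
  by (simp add: kapv_def tauv_def sum.distrib sum_distrib_left sum_distrib_right algebra_simps)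

definition Rsp :: "(nat \<Rightarrow> complex) \<Rightarrow> bool" where
  "Rsp u \<longleftrightarrow> (\<forall>k. k \<notin> {1,2,3} \<longrightarrow> u k = 0)"

definition hrel :: "nat \<Rightarrow> (nat \<Rightarrow> complex) \<Rightarrow> bool" where
  "hrel n u \<longleftrightarrow> (\<forall>k. k \<notin> {4..2*n+3} \<longrightarrow> u k = 0) \<and> (\<forall>l\<in>{1..n-1}. u (2*l+3) = \<i> * u (2*l+2))
     \<and> u (2*n+3) = - u (2*n+2)"

lemma linR_Rsp: "linR Rsp" unfolding linR_def Rsp_def by auto
lemma linR_hrel: "linR (hrel n)" unfolding linR_def hrel_def by (auto simp: algebra_simps)

lemma sum_split_aux: fixes n' :: nat and g :: "nat \<Rightarrow> complex" shows "(\<Sum>k=1..2*n'+4. g k) = g 1 + g 2 + g 3 + (\<Sum>l=1..n'. g (2*l+2) + g (2*l+3)) + (g (2*n'+4)::complex)"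
proof (induct n')
  case 0
  then show ?case by (simp add: numeral_eq_Suc)
next
  case (Suc n')
  have "(\<Sum>k=1..2*Suc n'+4. g k) = (\<Sum>k=1..2*n'+4. g k) + g (2*n'+5) + g (2*n'+6)"
    by (simp add: numeral_eq_Suc)
  then show ?case using Suc by (simp add: numeral_eq_Suc algebra_simps)
qed

lemma sum_split: fixes n :: nat and g :: "nat \<Rightarrow> complex" shows "n \<ge> 1 \<Longrightarrow> (\<Sum>k=1..2*n+2. g k) = g 1 + g 2 + g 3 + (\<Sum>l=1..n-1. g (2*l+2) + g (2*l+3)) + (g (2*n+2)::complex)"
proof -
  assume "n \<ge> 1"
  then obtain n' where n: "n = Suc n'" by (cases n) auto
  have a: "2*n+2 = 2*n'+4" "n - 1 = n'" using n by auto
  show ?thesis unfolding a using sum_split_aux[where n'=n' and g=g] .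
qed

lemma e: "(2*n+3::nat) - 1 = 2*n+2" by simp

lemma kap_hol: assumes n: "n \<ge> 1" and u: "hrel n u" and v: "hrel n v" shows "kapv (2*n+3) u v = 0"
proof -
  have z: "u 1 = 0" "u 2 = 0" "u 3 = 0" using u by (auto simp: hrel_def)
  have D: "u (2*n+3) = - u (2*n+2)" "v (2*n+3) = - v (2*n+2)" using u v by (auto simp: hrel_def)
  have C: "(\<Sum>l=1..n-1. u (2*l+2) * v (2*l+2) + u (2*l+3) * v (2*l+3)) = 0"
  proof -
    have "(\<Sum>l=1..n-1. u (2*l+2) * v (2*l+2) + u (2*l+3) * v (2*l+3)) = (\<Sum>l=1..n-1. 0)"
      using u v by (intro sum.cong) (auto simp: hrel_def algebra_simps)
    then show ?thesis by simp
  qed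
  have A: "kapv (2*n+3) u v = - u (2*n+3) * v (2*n+3) + (\<Sum>k=1..2*n+2. u k * v k)"
    by (simp only: kapv_def e)
  show ?thesis unfolding A sum_split[OF n] C D z by simp
qed

lemma kap_sp_hol: assumes "n \<ge> 1" "Rsp u" "hrel n v" shows "kapv (2*n+3) u v = 0"
proof -
  have h: "u k * v k = 0" for k
  proof (cases "k \<in> {1,2,3}")
    case True
    then have "k \<notin> {4..2*n+3}" by auto
    then have "v k = 0" using assms(3) unfolding hrel_def by blast
    then show ?thesis by simp
  next
    case False
    then have "u k = 0" using assms(2) unfolding Rsp_def by blast
    then show ?thesis by simp
  qed
  show ?thesis unfolding kapv_def mult_minus_left h by simp
qed

lemma tau_hol: assumes n: "n \<ge> 1" and M: "\<And>k. hrel n (M k)" and S: "\<And>k j. M k j = M j k" shows "tauv (2*n+3) M = 0"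
proof -
  have z: "M 1 1 = 0" "M 2 2 = 0" "M 3 3 = 0" using M by (auto simp: hrel_def)
  have p: "M (2*l+3) (2*l+3) = - M (2*l+2) (2*l+2)" if "l \<in> {1..n-1}" for l
  proof -
    have "M (2*l+3) (2*l+3) = \<i> * M (2*l+3) (2*l+2)" using M[of "2*l+3"] that by (auto simp: hrel_def)
    also have "\<dots> = \<i> * M (2*l+2) (2*l+3)" using S by simp
    also have "\<dots> = \<i> * (\<i> * M (2*l+2) (2*l+2))" using M[of "2*l+2"] that by (auto simp: hrel_def)
    finally show ?thesis by simp
  qed
  have q: "M (2*n+3) (2*n+3) = M (2*n+2) (2*n+2)"
  proof -
    have "M (2*n+3) (2*n+3) = - M (2*n+3) (2*n+2)" using M[of "2*n+3"] by (auto simp: hrel_def)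
    also have "\<dots> = - M (2*n+2) (2*n+3)" using S by simp
    also have "\<dots> = M (2*n+2) (2*n+2)" using M[of "2*n+2"] by (auto simp: hrel_def)
    finally show ?thesis .
  qed
  have C: "(\<Sum>l=1..n-1. M (2*l+2) (2*l+2) + M (2*l+3) (2*l+3)) = 0"
  proof -
    have "(\<Sum>l=1..n-1. M (2*l+2) (2*l+2) + M (2*l+3) (2*l+3)) = (\<Sum>l=1..n-1. 0)"
      using p by (intro sum.cong) auto
    then show ?thesis by simp
  qed
  have A: "tauv (2*n+3) M = - M (2*n+3) (2*n+3) + (\<Sum>k=1..2*n+2. M k k)"
    by (simp only: tauv_def e)
  show ?thesis unfolding A sum_split[OF n] C q z by simp
qed

lemma C2R_intro: "C2 m V f Df DDf \<Longrightarrow> (\<And>x. x \<in> V \<Longrightarrow> R (\<lambda>k. Df k x) \<and> (\<forall>k. R (\<lambda>j. DDf k j x))) \<Longrightarrow> C2R m V R f"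
  unfolding C2R_def by blast

lemma C2R_comp': assumes R: "linR R" and f: "C2R m V R f"
  and p: "\<And>x. x \<in> V \<Longrightarrow> (\<phi> has_field_derivative \<phi>1 (f x)) (at (f x)) \<and> \<phi>1 field_differentiable (at (f x))"
  shows "C2R m V R (\<lambda>x. \<phi> (f x))"
  using C2R_comp[OF R f, of \<phi> \<phi>1 "deriv \<phi>1"] p DERIV_deriv_iff_field_differentiable by blast

lemma finite_exps: "finite (exps n d)"
proof -
  have "exps n d \<subseteq> {\<alpha>. \<forall>k. \<alpha> k \<in> (if k \<in> {1..n} then {..d} else {0})}"
  proof
    fix \<alpha> assume a: "\<alpha> \<in> exps n d"
    show "\<alpha> \<in> {\<alpha>. \<forall>k. \<alpha> k \<in> (if k \<in> {1..n} then {..d} else {0})}"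
    proof (safe)
      fix k
      show "\<alpha> k \<in> (if k \<in> {1..n} then {..d} else {0})"
      proof (cases "k \<in> {1..n}")
        case True
        have "\<alpha> k \<le> (\<Sum>k=1..n. \<alpha> k)" using True by (intro member_le_sum) auto
        then show ?thesis using a True by (auto simp: exps_def)
      next
        case False
        then show ?thesis using a by (auto simp: exps_def)
      qed
    qed
  qed
  moreover have "finite {\<alpha>. \<forall>k. \<alpha> k \<in> (if k \<in> {1..n} then {..d} else {0::nat})}"
  proof (rule finite_subset[OF _ finite_set_of_finite_funs[of "{1..n}" "{..d}" 0]])
    show "{\<alpha>. \<forall>k. \<alpha> k \<in> (if k \<in> {1..n} then {..d} else {0})} \<subseteq> {f. \<forall>x. (x \<in> {1..n} \<longrightarrow> f x \<in> {..d}) \<and> (x \<notin> {1..n} \<longrightarrow> f x = 0)}"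
      by (auto split: if_splits)
  qed auto
  ultimately show ?thesis by (rule finite_subset)
qed

lemma C2R_zmap: assumes n: "n \<ge> 1" and k: "k \<in> {1..n}"
  shows "C2R (2*n+3) V (hrel n) (\<lambda>x. zmap n x k)"
proof (cases "k = n")
  case True
  have eq: "(\<lambda>x. zmap n x k) = (\<lambda>x. complex_of_real (x (2*n+2)) + (-1) * complex_of_real (x (2*n+3)))"
  proof -
    have "\<not> (n \<le> n - 1)" using n by arith
    then show ?thesis using True by (auto simp: zmap_def fun_eq_iff)
  qed
  have C: "C2 (2*n+3) V (\<lambda>x. complex_of_real (x (2*n+2)) + (-1) * complex_of_real (x (2*n+3)))
     (\<lambda>j x. (if j = 2*n+2 then 1 else 0) + (0 * complex_of_real (x (2*n+3)) + (-1) * (if j = 2*n+3 then 1 else 0)))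
     (\<lambda>k j x. 0 + (0 * complex_of_real (x (2*n+3)) + 0 * (if j = 2*n+3 then 1 else 0) + 0 * (if k = 2*n+3 then 1 else 0) + (-1) * 0))"
    by (intro C2_add C2_mult C2_const C2_coord) auto
  show ?thesis unfolding eq
    by (rule C2R_intro[OF C]) (use n in \<open>auto simp: hrel_def\<close>)
next
  case False
  then have k': "1 \<le> k" "k \<le> n - 1" using k by auto
  have eq: "(\<lambda>x. zmap n x k) = (\<lambda>x. complex_of_real (x (2*k+2)) + \<i> * complex_of_real (x (2*k+3)))"
    using k' by (auto simp: zmap_def Complex_eq)
  have C: "C2 (2*n+3) V (\<lambda>x. complex_of_real (x (2*k+2)) + \<i> * complex_of_real (x (2*k+3)))
     (\<lambda>j x. (if j = 2*k+2 then 1 else 0) + (0 * complex_of_real (x (2*k+3)) + \<i> * (if j = 2*k+3 then 1 else 0)))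
     (\<lambda>i j x. 0 + (0 * complex_of_real (x (2*k+3)) + 0 * (if j = 2*k+3 then 1 else 0) + 0 * (if i = 2*k+3 then 1 else 0) + \<i> * 0))"
    using k' by (intro C2_add C2_mult C2_const C2_coord) auto
  show ?thesis unfolding eq
    apply (rule C2R_intro[OF C]) using k' apply (auto simp: hrel_def) apply presburger+ done
qed

lemma C2R_hpoly: assumes n: "n \<ge> 1"
  shows "C2R (2*n+3) V (hrel n) (\<lambda>x. hpoly n d c (zmap n x))"
  unfolding hpoly_def
  by (intro C2R_sum[OF linR_hrel] finite_exps C2R_mult[OF linR_hrel] C2R_const[OF linR_hrel]
      C2R_prod[OF linR_hrel] C2R_power[OF linR_hrel] C2R_zmap[OF n]) auto

lemma C2R_coord_sp: "k \<in> {1,2,3} \<Longrightarrow> m \<ge> 3 \<Longrightarrow> C2R m V Rsp (\<lambda>x. complex_of_real (x k))"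
  by (rule C2R_intro[OF C2_coord]) (auto simp: Rsp_def)

lemma C2R_quad3: "m \<ge> 3 \<Longrightarrow> C2R m V Rsp (quad3 a)"
  unfolding quad3_def
  by (intro C2R_sum[OF linR_Rsp] finite_exps C2R_mult[OF linR_Rsp] C2R_const[OF linR_Rsp] C2R_coord_sp) auto

definition HMsp :: "nat \<Rightarrow> (nat\<Rightarrow>real) set \<Rightarrow> ((nat\<Rightarrow>real)\<Rightarrow>complex) \<Rightarrow> bool" where
  "HMsp m V f \<longleftrightarrow> (\<exists>Df DDf. C2 m V f Df DDf \<and> (\<forall>x\<in>V. Rsp (\<lambda>k. Df k x) \<and> (\<forall>k. Rsp (\<lambda>j. DDf k j x))
      \<and> kapv m (\<lambda>k. Df k x) (\<lambda>k. Df k x) = 0 \<and> tauv m (\<lambda>k j. DDf k j x) = 0))"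

lemma HMsp_restrict: "HMsp m V f \<Longrightarrow> W \<subseteq> V \<Longrightarrow> HMsp m W f"
  unfolding HMsp_def using C2_restrict by (metis subsetD)

lemma HMsp_comp: assumes f: "HMsp m V f"
  and p: "\<And>x. x \<in> V \<Longrightarrow> (\<phi> has_field_derivative \<phi>d (f x)) (at (f x)) \<and> \<phi>d field_differentiable (at (f x))"
  shows "HMsp m V (\<lambda>x. \<phi> (f x))"
proof -
  obtain Df DDf where f1: "C2 m V f Df DDf" and f2: "\<forall>x\<in>V. Rsp (\<lambda>k. Df k x) \<and> (\<forall>k. Rsp (\<lambda>j. DDf k j x))
      \<and> kapv m (\<lambda>k. Df k x) (\<lambda>k. Df k x) = 0 \<and> tauv m (\<lambda>k j. DDf k j x) = 0"
    using f unfolding HMsp_def by blast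
  have p': "\<And>x. x \<in> V \<Longrightarrow> (\<phi> has_field_derivative \<phi>d (f x)) (at (f x)) \<and> (\<phi>d has_field_derivative deriv \<phi>d (f x)) (at (f x))"
    using p DERIV_deriv_iff_field_differentiable by blast
  show ?thesis unfolding HMsp_def
    apply (rule exI, rule exI, rule conjI, rule C2_comp[OF f1 p'], assumption)
    using f2 by (simp add: linR_cmult[OF linR_Rsp] linR_c2[OF linR_Rsp] kapv_comp tauv_comp)
qed

lemma HMsp_power: assumes f: "HMsp m V f" shows "HMsp m V (\<lambda>x. f x ^ e)"
proof (rule HMsp_comp[where f=f and \<phi>="\<lambda>w. w ^ e" and \<phi>d="\<lambda>w. of_nat e * w ^ (e - Suc 0)", OF f])
  fix x
  have "((\<lambda>w. w ^ e) has_field_derivative of_nat e * (1 * f x ^ (e - Suc 0))) (at (f x))"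
    by (rule DERIV_power[OF DERIV_ident])
  then show "((\<lambda>w. w ^ e) has_field_derivative of_nat e * f x ^ (e - Suc 0)) (at (f x)) \<and>
     (\<lambda>w. of_nat e * w ^ (e - Suc 0)) field_differentiable at (f x)"
    by (auto intro!: derivative_intros)
qed

lemma HMsp_csqrt: "HMsp m V f \<Longrightarrow> (\<And>x. x \<in> V \<Longrightarrow> f x \<notin> \<real>\<^sub>\<le>\<^sub>0) \<Longrightarrow> HMsp m V (\<lambda>x. csqrt (f x))"
  apply (rule HMsp_comp[where f=f and \<phi>=csqrt and \<phi>d="\<lambda>w. inverse (2 * csqrt w)"])
   apply assumption
  apply (intro conjI has_field_derivative_csqrt)
   apply simp
  apply (intro derivative_intros field_differentiable_at_csqrt)
   apply simp
  apply (simp, metis nonpos_Reals_zero_I)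
  done

lemma sp_sum: fixes m' :: nat shows "3 \<le> m' \<Longrightarrow> (\<And>k. k \<notin> {1,2,3} \<Longrightarrow> g k = 0) \<Longrightarrow> (\<Sum>k=1..m'. g k) = (\<Sum>k=1..3. (g k :: complex))"
  by (rule sum.mono_neutral_right) auto

lemma HMsp_quad3: assumes m: "m \<ge> 4"
    and t: "\<forall>x. tauE 3 (quad3 a) x = 0" and k: "\<forall>x. kappaE 3 (quad3 a) (quad3 a) x = 0"
  shows "HMsp m UNIV (quad3 a)"
proof -
  obtain Df DDf where C: "C2 m UNIV (quad3 a) Df DDf" and R: "\<forall>x. Rsp (\<lambda>k. Df k x) \<and> (\<forall>k. Rsp (\<lambda>j. DDf k j x))"
    using C2R_quad3[of m UNIV a] m unfolding C2R_def by auto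
  have pd1: "pd k (quad3 a) = Df k" if "k \<in> {1..m}" for k
  proof
    fix y
    have "dat m (quad3 a) (\<lambda>k. Df k y) y" using C unfolding C2_def by blast
    from pd_eq[OF this that] show "pd k (quad3 a) y = Df k y" .
  qed
  have pd2: "pd j (pd k (quad3 a)) y = DDf k j y" if "k \<in> {1..m}" "j \<in> {1..m}" for k j y
  proof -
    have "dat m (Df k) (\<lambda>j. DDf k j y) y" using C unfolding C2_def by blast
    from pd_eq[OF this that(2)] show ?thesis using pd1[OF that(1)] by simp
  qed
  have m3: "m - 1 \<ge> 3" using m by auto
  have mm: "m \<notin> {1,2,3}" using m by auto
  show ?thesis unfolding HMsp_def
  proof (intro exI conjI ballI)
    show "C2 m UNIV (quad3 a) Df DDf" by (rule C)
    fix x :: "nat \<Rightarrow> real"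
    show "Rsp (\<lambda>k. Df k x)" "\<forall>k. Rsp (\<lambda>j. DDf k j x)" using R by auto
    have z1: "Df k x = 0" if "k \<notin> {1,2,3}" for k using R that unfolding Rsp_def by blast
    have z2: "DDf k k x = 0" if "k \<notin> {1,2,3}" for k using R that unfolding Rsp_def by blast
    have "kapv m (\<lambda>k. Df k x) (\<lambda>k. Df k x) = (\<Sum>k=1..3. Df k x * Df k x)"
    proof -
      have "(\<Sum>k=1..m-1. Df k x * Df k x) = (\<Sum>k=1..3. Df k x * Df k x)"
        by (rule sp_sum[OF m3]) (simp add: z1)
      then show ?thesis by (simp add: kapv_def z1[OF mm])
    qed
    also have "\<dots> = kappaE 3 (quad3 a) (quad3 a) x"
      unfolding kappaE_def using m pd1 by (intro sum.cong) auto
    finally show "kapv m (\<lambda>k. Df k x) (\<lambda>k. Df k x) = 0" using k by simp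
    have "tauv m (\<lambda>k j. DDf k j x) = (\<Sum>k=1..3. DDf k k x)"
    proof -
      have "(\<Sum>k=1..m-1. DDf k k x) = (\<Sum>k=1..3. DDf k k x)"
        by (rule sp_sum[OF m3]) (simp add: z2)
      then show ?thesis by (simp add: tauv_def z2[OF mm])
    qed
    also have "\<dots> = tauE 3 (quad3 a) x"
      unfolding tauE_def using m pd2 by (intro sum.cong) auto
    finally show "tauv m (\<lambda>k j. DDf k j x) = 0" using t by simp
  qed
qed

definition HMF :: "nat \<Rightarrow> (nat\<Rightarrow>real) set \<Rightarrow> ((nat\<Rightarrow>real)\<Rightarrow>complex) \<Rightarrow> (nat \<Rightarrow> (nat\<Rightarrow>real)\<Rightarrow>complex)
   \<Rightarrow> (nat \<Rightarrow> nat \<Rightarrow> (nat\<Rightarrow>real)\<Rightarrow>complex) \<Rightarrow> bool" where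
  "HMF m V F DF DDF \<longleftrightarrow> C2 m V F DF DDF \<and> (\<forall>x\<in>V. kapv m (\<lambda>k. DF k x) (\<lambda>k. DF k x) = 0 \<and> tauv m (\<lambda>k j. DDF k j x) = 0)"

lemma nonpos_conv: "(w \<in> complex_of_real ` {t. t \<le> 0}) \<longleftrightarrow> w \<in> \<real>\<^sub>\<le>\<^sub>0"
  by (auto simp: nonpos_Reals_def)

lemma B_HMsp: assumes n: "n \<ge> 1"
    and t: "\<forall>x. tauE 3 (quad3 a) x = 0" and k: "\<forall>x. kappaE 3 (quad3 a) (quad3 a) x = 0"
  shows "HMsp (2*n+3) (Vset n d a cQ) (\<lambda>x. half_pow (quad3 a x) d)"
proof -
  have q: "HMsp (2*n+3) UNIV (quad3 a)" using HMsp_quad3[OF _ t k] n by auto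
  show ?thesis
  proof (cases "even d")
    case True
    have "HMsp (2*n+3) UNIV (\<lambda>x. quad3 a x ^ (d div 2))" by (rule HMsp_power[OF q])
    then have "HMsp (2*n+3) (Vset n d a cQ) (\<lambda>x. quad3 a x ^ (d div 2))" by (rule HMsp_restrict) auto
    moreover have "(\<lambda>x. half_pow (quad3 a x) d) = (\<lambda>x. quad3 a x ^ (d div 2))"
      using True by (simp add: half_pow_def)
    ultimately show ?thesis by simp
  next
    case False
    let ?W = "{x. quad3 a x \<notin> \<real>\<^sub>\<le>\<^sub>0}"
    have "HMsp (2*n+3) ?W (quad3 a)" by (rule HMsp_restrict[OF q]) auto
    then have "HMsp (2*n+3) ?W (\<lambda>x. csqrt (quad3 a x))" by (rule HMsp_csqrt) auto
    then have "HMsp (2*n+3) ?W (\<lambda>x. csqrt (quad3 a x) ^ d)" by (rule HMsp_power)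
    then have "HMsp (2*n+3) (Vset n d a cQ) (\<lambda>x. csqrt (quad3 a x) ^ d)"
      by (rule HMsp_restrict) (use False in \<open>auto simp: Vset_def nonpos_conv\<close>)
    moreover have "(\<lambda>x. half_pow (quad3 a x) d) = (\<lambda>x. csqrt (quad3 a x) ^ d)"
      using False by (simp add: half_pow_def)
    ultimately show ?thesis by simp
  qed
qed

lemma C2R_comp2: assumes "linR R" "C2R m V R f"
  "\<And>x. x \<in> V \<Longrightarrow> (\<phi> has_field_derivative g (f x)) (at (f x)) \<and> g field_differentiable (at (f x))"
  shows "C2R m V R (\<lambda>x. \<phi> (f x))"
  by (rule C2R_comp'[OF assms(1,2)]) (rule assms(3))

lemma R_C2R: assumes n: "n \<ge> 1"
  shows "C2R (2*n+3) (Vset n d a cQ) (hrel n) (\<lambda>x. inverse (hpoly n d cQ (zmap n x)))"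
proof (rule C2R_comp2[OF linR_hrel, where f="\<lambda>x. hpoly n d cQ (zmap n x)" and \<phi>=inverse and g="\<lambda>w. - (inverse w ^ Suc (Suc 0))"])
  show "C2R (2*n+3) (Vset n d a cQ) (hrel n) (\<lambda>x. hpoly n d cQ (zmap n x))"
    by (rule C2R_hpoly[OF n])
  fix x assume "x \<in> Vset n d a cQ"
  then have "hpoly n d cQ (zmap n x) \<noteq> 0" by (simp add: Vset_def)
  then show "(inverse has_field_derivative - (inverse (hpoly n d cQ (zmap n x)) ^ Suc (Suc 0))) (at (hpoly n d cQ (zmap n x))) \<and>
     (\<lambda>w. - (inverse w ^ Suc (Suc 0))) field_differentiable at (hpoly n d cQ (zmap n x))"
    by (intro conjI DERIV_inverse derivative_intros) auto
qed

lemma F_data: assumes n: "n \<ge> 1"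
    and t: "\<forall>x. tauE 3 (quad3 a) x = 0" and k: "\<forall>x. kappaE 3 (quad3 a) (quad3 a) x = 0"
  shows "\<exists>DF DDF. HMF (2*n+3) (Vset n d a cQ) (PhiHat n d a cP cQ) DF DDF"
proof -
  let ?V = "Vset n d a cQ" and ?m = "2*n+3"
  define B where "B = (\<lambda>x. half_pow (quad3 a x) d)"
  define R where "R = (\<lambda>x. inverse (hpoly n d cQ (zmap n x)))"
  define G where "G = (\<lambda>x. hpoly n d cP (zmap n x) * R x)"
  obtain DB DDB where B1: "C2 ?m ?V B DB DDB" and B2: "\<forall>x\<in>?V. Rsp (\<lambda>k. DB k x) \<and> (\<forall>k. Rsp (\<lambda>j. DDB k j x))
      \<and> kapv ?m (\<lambda>k. DB k x) (\<lambda>k. DB k x) = 0 \<and> tauv ?m (\<lambda>k j. DDB k j x) = 0"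
    using B_HMsp[OF n t k, of d cQ] unfolding HMsp_def B_def by blast
  have RR: "C2R ?m ?V (hrel n) R" unfolding R_def by (rule R_C2R[OF n])
  obtain DR DDR where R1: "C2 ?m ?V R DR DDR" and R2: "\<forall>x\<in>?V. hrel n (\<lambda>k. DR k x) \<and> (\<forall>k. hrel n (\<lambda>j. DDR k j x))"
    using RR unfolding C2R_def by blast
  have GG: "C2R ?m ?V (hrel n) G" unfolding G_def
    by (rule C2R_mult[OF linR_hrel C2R_hpoly[OF n] RR])
  obtain DG DDG where G1: "C2 ?m ?V G DG DDG" and G2: "\<forall>x\<in>?V. hrel n (\<lambda>k. DG k x) \<and> (\<forall>k. hrel n (\<lambda>j. DDG k j x))"
    using GG unfolding C2R_def by blast
  have Feq: "PhiHat n d a cP cQ = (\<lambda>x. (B x * R x) + G x)"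
    by (auto simp: fun_eq_iff PhiHat_def B_def R_def G_def divide_inverse distrib_right)
  have C: "C2 ?m ?V (\<lambda>x. (B x * R x) + G x) (\<lambda>k x. (DB k x * R x + B x * DR k x) + DG k x)
     (\<lambda>k j x. (DDB k j x * R x + DB k x * DR j x + DB j x * DR k x + B x * DDR k j x) + DDG k j x)"
    by (rule C2_add[OF C2_mult[OF B1 R1] G1])
  show ?thesis
  proof (intro exI)
    show "HMF ?m ?V (PhiHat n d a cP cQ) (\<lambda>k x. (DB k x * R x + B x * DR k x) + DG k x)
     (\<lambda>k j x. (DDB k j x * R x + DB k x * DR j x + DB j x * DR k x + B x * DDR k j x) + DDG k j x)"
      unfolding HMF_def Feq
    proof (intro conjI ballI C)
      fix x assume x: "x \<in> ?V"
      have h: "hrel n (\<lambda>k. B x * DR k x + DG k x)"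
        using R2 G2 x linR_add[OF linR_hrel] linR_cmult[OF linR_hrel] by blast
      have e1: "(\<lambda>k. (DB k x * R x + B x * DR k x) + DG k x) = (\<lambda>k. DB k x * R x + (B x * DR k x + DG k x))"
        by (simp add: add.assoc)
      show "kapv ?m (\<lambda>k. (DB k x * R x + B x * DR k x) + DG k x) (\<lambda>k. (DB k x * R x + B x * DR k x) + DG k x) = 0"
        unfolding e1 kapv_split
        using B2 x kap_sp_hol[OF n _ h] kap_hol[OF n h h] by simp
      have sR: "\<And>k j. DDR k j x = DDR j k x" using R1 x unfolding C2_def by blast
      have sG: "\<And>k j. DDG k j x = DDG j k x" using G1 x unfolding C2_def by blast
      show "tauv ?m (\<lambda>k j. (DDB k j x * R x + DB k x * DR j x + DB j x * DR k x + B x * DDR k j x) + DDG k j x) = 0"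
        unfolding tauv_split
        using B2 x kap_sp_hol[OF n, of "\<lambda>k. DB k x" "\<lambda>k. DR k x"] R2 G2
          tau_hol[OF n, of "\<lambda>k j. DDR k j x"] tau_hol[OF n, of "\<lambda>k j. DDG k j x"] sR sG by simp
    qed
  qed
qed

definition smul :: "real \<Rightarrow> (nat \<Rightarrow> real) \<Rightarrow> (nat \<Rightarrow> real)" where
  "smul c x = (\<lambda>k. c * x k)"

lemma quad3_smul: "quad3 a (smul c x) = (complex_of_real c)^2 * quad3 a x"
  by (simp add: quad3_def smul_def sum_distrib_left algebra_simps power2_eq_square)

lemma csqrt_scale: assumes "c > 0" shows "csqrt ((complex_of_real c)^2 * w) = of_real c * csqrt w"
proof (rule csqrt_unique)
  show "(of_real c * csqrt w)^2 = (complex_of_real c)^2 * w" by (simp add: power_mult_distrib)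
  show "0 < Re (complex_of_real c * csqrt w) \<or> Re (complex_of_real c * csqrt w) = 0 \<and> 0 \<le> Im (complex_of_real c * csqrt w)"
    using csqrt_principal[of w] assms by (auto simp: zero_less_mult_iff zero_le_mult_iff)
qed

lemma half_pow_scale: assumes "c > 0" shows "half_pow ((complex_of_real c)^2 * w) d = of_real c ^ d * half_pow w d"
proof (cases "even d")
  case True
  then obtain e where d: "d = 2 * e" by auto
  show ?thesis using True by (simp add: half_pow_def d power_mult_distrib power_mult)
next
  case False
  then show ?thesis by (simp add: half_pow_def csqrt_scale[OF assms] power_mult_distrib)
qed

lemma zmap_smul: "zmap n (smul c x) = (\<lambda>k. of_real c * zmap n x k)"
  by (auto simp: fun_eq_iff zmap_def smul_def Complex_eq algebra_simps)

lemma hpoly_scale: "hpoly n d cc (\<lambda>k. w * z k) = w ^ d * hpoly n d cc z"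
proof -
  have "cc \<alpha> * (\<Prod>k=1..n. (w * z k) ^ \<alpha> k) = w ^ d * (cc \<alpha> * (\<Prod>k=1..n. z k ^ \<alpha> k))" if "\<alpha> \<in> exps n d" for \<alpha>
  proof -
    have "(\<Prod>k=1..n. (w * z k) ^ \<alpha> k) = (\<Prod>k=1..n. w ^ \<alpha> k) * (\<Prod>k=1..n. z k ^ \<alpha> k)"
      by (simp add: power_mult_distrib prod.distrib)
    also have "(\<Prod>k=1..n. w ^ \<alpha> k) = w ^ d"
      using that by (simp add: power_sum[symmetric] exps_def)
    finally show ?thesis by simp
  qed
  then show ?thesis unfolding hpoly_def sum_distrib_left by (rule sum.cong[OF refl])
qed

lemma PhiHat_smul: assumes "c > 0" shows "PhiHat n d a cP cQ (smul c x) = PhiHat n d a cP cQ x"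
proof -
  have nz: "(complex_of_real c) ^ d \<noteq> 0" using assms by simp
  have e: "(of_real c ^ d * A + of_real c ^ d * P) / (of_real c ^ d * Q) = (A + P)/Q" for A P Q :: complex
    using nz by (metis distrib_left mult_divide_mult_cancel_left)
  show ?thesis
    unfolding PhiHat_def quad3_smul half_pow_scale[OF assms] zmap_smul hpoly_scale e ..
qed

lemma lor_smul: "lor m (smul c x) (smul c x) = c^2 * lor m x x"
  by (simp add: lor_def smul_def sum_distrib_left algebra_simps power2_eq_square)

lemma nonpos_scale: assumes "c > 0" shows "((complex_of_real c)^2 * w \<in> \<real>\<^sub>\<le>\<^sub>0) \<longleftrightarrow> w \<in> \<real>\<^sub>\<le>\<^sub>0"
proof -
  have r: "Re ((complex_of_real c)^2 * w) = c^2 * Re w" "Im ((complex_of_real c)^2 * w) = c^2 * Im w"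
    by (simp_all add: power2_eq_square)
  have "c^2 > 0" using assms by simp
  then show ?thesis unfolding complex_nonpos_Reals_iff r by (simp add: mult_le_0_iff)
qed

lemma Vset_smul: assumes "c > 0" "x \<in> Vset n d a cQ" shows "smul c x \<in> Vset n d a cQ"
  using assms
  by (auto simp: Vset_def Uset_def supp_in_def lor_smul smul_def[symmetric] quad3_smul zmap_smul hpoly_scale
       nonpos_conv nonpos_scale mult_pos_neg) (auto simp: smul_def)

lemma ev_cont: "continuous (at t) g \<Longrightarrow> open S \<Longrightarrow> g t \<in> S \<Longrightarrow> eventually (\<lambda>s. g s \<in> S) (nhds t)"
  by (auto simp: continuous_at_open eventually_nhds)

lemma dat_cont: "dat m f D x \<Longrightarrow> cd m \<gamma> \<gamma>' t \<Longrightarrow> \<gamma> t = x \<Longrightarrow> continuous (at t) (\<lambda>s. f (\<gamma> s))"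
  unfolding dat_def by (blast intro: has_vector_derivative_continuous)

lemma C2R_cont: "C2R m UNIV R f \<Longrightarrow> cd m \<gamma> \<gamma>' t \<Longrightarrow> continuous (at t) (\<lambda>s. f (\<gamma> s))"
  unfolding C2R_def C2_def by (blast intro: dat_cont)

lemma Vset_ev: assumes n: "n \<ge> 1" and x: "x \<in> Vset n d a cQ" and c: "cd (2*n+3) \<gamma> \<gamma>' t" and g: "\<gamma> t = x"
    and s: "\<forall>s. supp_in (2*n+3) (\<gamma> s)"
  shows "eventually (\<lambda>s. \<gamma> s \<in> Vset n d a cQ) (nhds t)"
proof -
  let ?m = "2*n+3"
  have ck: "continuous (at t) (\<lambda>s. \<gamma> s k)" if "k \<in> {1..?m}" for k
    using c that unfolding cd_def by (blast intro: DERIV_isCont)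
  have cl: "continuous (at t) (\<lambda>s. lor ?m (\<gamma> s) (\<gamma> s))"
    unfolding lor_def by (intro continuous_intros ck) auto
  have e1: "eventually (\<lambda>s. lor ?m (\<gamma> s) (\<gamma> s) \<in> {r. r < 0}) (nhds t)"
    by (rule ev_cont[OF cl]) (use x g in \<open>auto simp: Vset_def Uset_def open_Collect_less\<close>)
  have cq: "continuous (at t) (\<lambda>s. hpoly n d cQ (zmap n (\<gamma> s)))"
    by (rule C2R_cont[OF C2R_hpoly[OF n] c])
  have e2: "eventually (\<lambda>s. hpoly n d cQ (zmap n (\<gamma> s)) \<in> - {0}) (nhds t)"
    by (rule ev_cont[OF cq]) (use x g in \<open>auto simp: Vset_def\<close>)
  have cp: "continuous (at t) (\<lambda>s. quad3 a (\<gamma> s))"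
    by (rule C2R_cont[OF C2R_quad3 c]) auto
  have e3: "eventually (\<lambda>s. odd d \<longrightarrow> quad3 a (\<gamma> s) \<in> - \<real>\<^sub>\<le>\<^sub>0) (nhds t)"
  proof (cases "odd d")
    case True
    have "eventually (\<lambda>s. quad3 a (\<gamma> s) \<in> - \<real>\<^sub>\<le>\<^sub>0) (nhds t)"
      by (rule ev_cont[OF cp]) (use x g True in \<open>auto simp: Vset_def nonpos_conv\<close>)
    then show ?thesis by (rule eventually_mono) auto
  qed auto
  show ?thesis
    using e1 e2 e3 by eventually_elim (use s in \<open>auto simp: Vset_def Uset_def nonpos_conv\<close>)
qed

lemma supp_upd: "supp_in m x \<Longrightarrow> j \<in> {1..m} \<Longrightarrow> supp_in m (x(j:=s))"
  by (auto simp: supp_in_def)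

lemma Vset_line_ev: assumes n: "n \<ge> 1" and x: "x \<in> Vset n d a cQ" and j: "j \<in> {1..2*n+3}"
  shows "eventually (\<lambda>s. x(j:=s) \<in> Vset n d a cQ) (nhds (x j))"
proof (rule Vset_ev[OF n x cd_line])
  show "x(j := x j) = x" by simp
  have "supp_in (2*n+3) x" using x by (simp add: Vset_def Uset_def)
  then show "\<forall>s. supp_in (2*n+3) (x(j:=s))" using j supp_upd by blast
qed

lemma pd2_eq: assumes n: "n \<ge> 1" and C: "C2 (2*n+3) (Vset n d a cQ) F DF DDF" and x: "x \<in> Vset n d a cQ"
    and k: "k \<in> {1..2*n+3}" and j: "j \<in> {1..2*n+3}"
  shows "has_pd j (pd k F) x \<and> pd j (pd k F) x = DDF k j x"
proof -
  have "((\<lambda>t. pd k F (x(j:=t))) has_vector_derivative DDF k j x) (at (x j))"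
    by (rule second_pd[OF C x k j Vset_line_ev[OF n x j]])
  then show ?thesis unfolding has_pd_def pd_def
    by (auto intro: differentiableI_vector vector_derivative_at)
qed

lemma part1: assumes n: "n \<ge> 1" and H: "HMF (2*n+3) (Vset n d a cQ) F DF DDF"
  shows "harmonic_morphism_L (2*n+3) (Vset n d a cQ) F"
  unfolding harmonic_morphism_L_def
proof (intro ballI conjI)
  fix x assume x: "x \<in> Vset n d a cQ"
  let ?m = "2*n+3"
  have C: "C2 ?m (Vset n d a cQ) F DF DDF" using H by (simp add: HMF_def)
  have d1: "dat ?m F (\<lambda>k. DF k x) x" using C x by (simp add: C2_def)
  have p1: "pd k F x = DF k x" if "k \<in> {1..?m}" for k using pd_eq[OF d1 that] .
  have p2: "pd j (pd k F) x = DDF k j x" if "k \<in> {1..?m}" "j \<in> {1..?m}" for k j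
    using pd2_eq[OF n C x that] by blast
  show "twice_pd ?m F x" unfolding twice_pd_def
    using has_pd_dat[OF d1] pd2_eq[OF n C x] by blast
  have "tauL ?m F x = tauv ?m (\<lambda>k j. DDF k j x)"
    unfolding tauL_def tauv_def using p2 by (simp del: One_nat_def)
  then show "tauL ?m F x = 0" using H x by (simp add: HMF_def)
  have "kappaL ?m F F x = kapv ?m (\<lambda>k. DF k x) (\<lambda>k. DF k x)"
    unfolding kappaL_def kapv_def using p1 by (simp del: One_nat_def)
  then show "kappaL ?m F F x = 0" using H x by (simp add: HMF_def)
qed

lemma sum_delta_c: fixes k m :: nat shows "k \<in> {1..m} \<Longrightarrow> (\<Sum>l=1..m. D l * complex_of_real (if l = k then c else 0)) = D k * of_real c"
proof -
  assume k: "k \<in> {1..m}"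
  have "(\<Sum>l=1..m. D l * complex_of_real (if l = k then c else 0)) = (\<Sum>l=1..m. if l = k then D l * of_real c else 0)"
    by (rule sum.cong) auto
  also have "\<dots> = D k * of_real c" using k by (subst sum.delta[OF finite_atLeastAtMost]) auto
  finally show ?thesis .
qed

lemma cd_smul: "cd m (\<lambda>c. smul c x) x t"
  unfolding cd_def smul_def by (auto intro!: derivative_eq_intros)

lemma cd_smul_line: "cd m (\<lambda>u. smul c (x(k:=u))) (\<lambda>l. if l = k then c else 0) t"
  unfolding cd_def smul_def
proof
  fix l assume "l \<in> {1..m}"
  show "((\<lambda>u. c * (x(k := u)) l) has_real_derivative (if l = k then c else 0)) (at t)"
    by (cases "l = k") (auto intro!: derivative_eq_intros)
qed

lemma smul_1: "smul 1 x = x" by (simp add: smul_def)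

lemma near1_pos: "dist c (1::real) < 1/2 \<Longrightarrow> c > 0"
  by (auto simp: dist_real_def abs_if split: if_splits)

lemma hvd_transform: "(f has_vector_derivative D) (at t) \<Longrightarrow> e > 0 \<Longrightarrow> (\<And>s. dist s t < e \<Longrightarrow> f s = g s)
   \<Longrightarrow> (g has_vector_derivative D) (at t)"
  using has_vector_derivative_transform_within[where f=f and f'=D and x=t and S=UNIV and d=e and g=g] by auto

locale euler_setting =
  fixes m :: nat and V and F and DF and DDF
  assumes C: "C2 m V F DF DDF"
    and cone: "\<And>x c. x \<in> V \<Longrightarrow> c > 0 \<Longrightarrow> smul c x \<in> V"
    and hom: "\<And>x c. c > 0 \<Longrightarrow> F (smul c x) = F x"
begin

lemma E1: assumes x: "x \<in> V" shows "(\<Sum>l=1..m. DF l x * complex_of_real (x l)) = 0"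
proof -
  have d: "dat m F (\<lambda>k. DF k x) x" using C x by (simp add: C2_def)
  have a: "((\<lambda>c. F (smul c x)) has_vector_derivative (\<Sum>l=1..m. DF l x * complex_of_real (x l))) (at 1)"
    using d cd_smul[of m x 1] smul_1[of x] unfolding dat_def by blast
  have b: "((\<lambda>c. F (smul c x)) has_vector_derivative 0) (at 1)"
  proof (rule hvd_transform[where e="1/2"])
    show "((\<lambda>c. F x) has_vector_derivative 0) (at 1)" by simp
    show "(0::real) < 1/2" by simp
    fix c :: real assume "dist c 1 < 1/2"
    then show "F x = F (smul c x)" using hom near1_pos by metis
  qed
  show ?thesis using vector_derivative_unique_at[OF a b] .
qed

lemma E2: assumes x: "x \<in> V" and c: "c > 0" and k: "k \<in> {1..m}"
  shows "DF k (smul c x) = DF k x / of_real c"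
proof -
  have d: "dat m F (\<lambda>k. DF k (smul c x)) (smul c x)" using C cone[OF x c] by (simp add: C2_def)
  have a: "((\<lambda>u. F (smul c (x(k:=u)))) has_vector_derivative
       (\<Sum>l=1..m. DF l (smul c x) * complex_of_real (if l = k then c else 0))) (at (x k))"
    using d cd_smul_line[of m c x k "x k"] unfolding dat_def by auto
  have d2: "dat m F (\<lambda>k. DF k x) x" using C x by (simp add: C2_def)
  have b: "((\<lambda>u. F (x(k:=u))) has_vector_derivative DF k x) (at (x k))"
    by (rule pd_dat[OF d2 k])
  have "((\<lambda>u. F (smul c (x(k:=u)))) has_vector_derivative DF k x) (at (x k))"
    using b hom[OF c] by simp
  then have "DF k (smul c x) * of_real c = DF k x"
    using vector_derivative_unique_at[OF a] sum_delta_c[OF k] by metis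
  then show ?thesis using c by (simp add: field_simps)
qed

lemma E3: assumes x: "x \<in> V" and k: "k \<in> {1..m}"
  shows "(\<Sum>l=1..m. DDF k l x * complex_of_real (x l)) = - DF k x"
proof -
  have d: "dat m (DF k) (\<lambda>j. DDF k j x) x" using C x unfolding C2_def by blast
  have a: "((\<lambda>c. DF k (smul c x)) has_vector_derivative (\<Sum>l=1..m. DDF k l x * complex_of_real (x l))) (at 1)"
    using d cd_smul[of m x 1] smul_1[of x] unfolding dat_def by blast
  have b0: "((\<lambda>c. DF k x * complex_of_real (inverse c)) has_vector_derivative DF k x * of_real (- 1)) (at 1)"
    by (intro has_vector_derivative_mult_right has_vector_derivative_of_real) (auto intro!: derivative_eq_intros)
  have b: "((\<lambda>c. DF k (smul c x)) has_vector_derivative DF k x * of_real (- 1)) (at 1)"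
  proof (rule hvd_transform[where e="1/2", OF b0])
    show "(0::real) < 1/2" by simp
    fix c :: real assume "dist c 1 < 1/2"
    then have "c > 0" by (rule near1_pos)
    then show "DF k x * complex_of_real (inverse c) = DF k (smul c x)"
      using E2[OF x _ k] by (simp add: divide_inverse)
  qed
  show ?thesis using vector_derivative_unique_at[OF a b] by simp
qed

end

definition rr :: "nat \<Rightarrow> (nat \<Rightarrow> real) \<Rightarrow> real" where
  "rr N w = sqrt (1 + (\<Sum>i=1..N. (w i)^2))"

lemma rr_pos: "rr N w > 0"
proof -
  have "0 \<le> (\<Sum>i=1..N. (w i)^2)" by (intro sum_nonneg) auto
  then show ?thesis by (simp add: rr_def)
qed

lemma rr_sq: "(rr N w)^2 = 1 + (\<Sum>i=1..N. (w i)^2)"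
proof -
  have "0 \<le> (\<Sum>i=1..N. (w i)^2)" by (intro sum_nonneg) auto
  then show ?thesis by (simp add: rr_def)
qed

lemma sum_upd: fixes w :: "nat \<Rightarrow> real" assumes i: "i \<in> {1..N}"
  shows "(\<Sum>l=1..N. ((w(i:=u)) l)^2) = (\<Sum>l=1..N. (w l)^2) - (w i)^2 + u^2"
proof -
  have "(\<Sum>l=1..N. ((w(i:=u)) l)^2) = ((w(i:=u)) i)^2 + (\<Sum>l\<in>{1..N}-{i}. ((w(i:=u)) l)^2)"
    using i by (simp add: sum.remove)
  also have "(\<Sum>l\<in>{1..N}-{i}. ((w(i:=u)) l)^2) = (\<Sum>l\<in>{1..N}-{i}. (w l)^2)"
    by (rule sum.cong) auto
  also have "\<dots> = (\<Sum>l=1..N. (w l)^2) - (w i)^2"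
    using i by (simp add: sum_diff1)
  finally show ?thesis by simp
qed

lemma rr_upd: assumes i: "i \<in> {1..N}" shows "rr N (w(i:=u)) = sqrt (1 + ((\<Sum>l=1..N. (w l)^2) - (w i)^2) + u^2)"
  unfolding rr_def sum_upd[OF i] by (simp add: algebra_simps)

lemma rr_deriv: assumes i: "i \<in> {1..N}"
  shows "((\<lambda>u. rr N (w(i:=u))) has_real_derivative (w i / rr N w)) (at (w i))"
proof -
  let ?C = "1 + ((\<Sum>l=1..N. (w l)^2) - (w i)^2)"
  have e: "?C + (w i)^2 = (rr N w)^2" by (simp add: rr_sq)
  have p: "?C + (w i)^2 > 0" unfolding e using rr_pos[of N w] by simp
  have d1: "((\<lambda>u. ?C + u^2) has_real_derivative (2 * w i)) (at (w i))"
    by (auto intro!: derivative_eq_intros)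
  have "((\<lambda>u. sqrt (?C + u^2)) has_real_derivative (inverse (sqrt (?C + (w i)^2)) / 2 * (2 * w i))) (at (w i))"
    by (rule DERIV_chain'[OF d1 DERIV_real_sqrt[OF p]])
  moreover have "sqrt (?C + (w i)^2) = rr N w" unfolding e using rr_pos[of N w] by simp
  ultimately have "((\<lambda>u. sqrt (?C + u^2)) has_real_derivative (w i / rr N w)) (at (w i))"
    by (simp add: field_simps)
  then show ?thesis using rr_upd[OF i] by simp
qed

definition hv :: "nat \<Rightarrow> real \<Rightarrow> (nat \<Rightarrow> real) \<Rightarrow> nat \<Rightarrow> nat \<Rightarrow> real" where
  "hv N \<sigma> w i = (\<lambda>l. if l = i then 1 else if l = N+1 then \<sigma> * (w i / rr N w) else 0)"

lemma hchart_rr: "hchart N \<sigma> w = (\<lambda>k. if k \<in> {1..N} then w k else if k = N + 1 then \<sigma> * rr N w else 0)"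
  unfolding hchart_def rr_def by (rule refl)

lemma cd_hchart': assumes i: "i \<in> {1..N}"
  shows "cd (N+1) (\<lambda>u. hchart N \<sigma> (w(i:=u))) (hv N \<sigma> w i) (w i)"
  unfolding cd_def
proof
  fix l assume l: "l \<in> {1..N+1}"
  show "((\<lambda>u. hchart N \<sigma> (w(i:=u)) l) has_real_derivative hv N \<sigma> w i l) (at (w i))"
  proof (cases "l = N+1")
    case True
    then show ?thesis using i DERIV_cmult[OF rr_deriv[OF i], of \<sigma>]
      by (simp add: hchart_rr hv_def)
  next
    case False
    then have l': "l \<in> {1..N}" using l by auto
    show ?thesis using l' i False
      by (cases "l = i") (auto simp: hchart_rr hv_def)
  qed
qed

lemma supp_hchart: "supp_in (N+1) (hchart N \<sigma> w)"
  by (simp add: supp_in_def hchart_def)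

lemma sum_hv: fixes D :: "nat \<Rightarrow> complex" assumes i: "i \<in> {1..N}"
  shows "(\<Sum>l=1..N+1. D l * of_real (hv N \<sigma> w i l)) = D i + D (N+1) * of_real (\<sigma> * (w i / rr N w))"
proof -
  have "(\<Sum>l=1..N+1. D l * of_real (hv N \<sigma> w i l)) = (\<Sum>l=1..N. D l * of_real (hv N \<sigma> w i l)) + D (N+1) * of_real (hv N \<sigma> w i (N+1))"
    by simp
  also have "(\<Sum>l=1..N. D l * of_real (hv N \<sigma> w i l)) = (\<Sum>l=1..N. if l = i then D l else 0)"
    by (rule sum.cong) (auto simp: hv_def)
  also have "\<dots> = D i" using i by (subst sum.delta[OF finite_atLeastAtMost]) auto
  finally show ?thesis using i by (simp add: hv_def)
qed

lemma alg_metric: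
  fixes D :: "nat \<Rightarrow> complex" and Dt :: complex and w :: "nat \<Rightarrow> real" and \<sigma> \<rho> :: real
  assumes \<rho>: "\<rho>^2 = 1 + (\<Sum>j=1..N. (w j)^2)" "\<rho> > 0"
    and E: "(\<Sum>l=1..N. D l * of_real (w l)) + Dt * of_real (\<sigma> * \<rho>) = 0" and i: "i \<in> {1..N}"
  shows "(\<Sum>j=1..N. of_real ((if i = j then 1 else 0) + w i * w j) * (D j + Dt * of_real (\<sigma> * (w j / \<rho>)))) = D i"
proof -
  have t: "of_real ((if i = j then 1 else 0) + w i * w j) * (D j + Dt * of_real (\<sigma> * (w j / \<rho>))) =
     (if i = j then D j + Dt * of_real (\<sigma> * (w j / \<rho>)) else 0) + of_real (w i) * (D j * of_real (w j))
     + Dt * of_real (\<sigma> * w i / \<rho>) * of_real ((w j)^2)" for j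
    by (simp add: algebra_simps power2_eq_square)
  have "(\<Sum>j=1..N. of_real ((if i = j then 1 else 0) + w i * w j) * (D j + Dt * of_real (\<sigma> * (w j / \<rho>))))
     = (\<Sum>j=1..N. (if i = j then D j + Dt * of_real (\<sigma> * (w j / \<rho>)) else 0)) + of_real (w i) * (\<Sum>j=1..N. D j * of_real (w j))
     + Dt * of_real (\<sigma> * w i / \<rho>) * of_real (\<Sum>j=1..N. (w j)^2)"
    unfolding t by (simp add: sum.distrib sum_distrib_left)
  also have "(\<Sum>j=1..N. (if i = j then D j + Dt * of_real (\<sigma> * (w j / \<rho>)) else 0)) = D i + Dt * of_real (\<sigma> * (w i / \<rho>))"
    using i by (subst sum.delta'[OF finite_atLeastAtMost]) auto
  also have "(\<Sum>j=1..N. D j * of_real (w j)) = - Dt * of_real (\<sigma> * \<rho>)" using E by (simp add: eq_neg_iff_add_eq_0)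
  also have "(\<Sum>j=1..N. (w j)^2) = \<rho>^2 - 1" using \<rho>(1) by simp
  finally have L: "(\<Sum>j=1..N. of_real ((if i = j then 1 else 0) + w i * w j) * (D j + Dt * of_real (\<sigma> * (w j / \<rho>))))
     = D i + Dt * of_real (\<sigma> * (w i / \<rho>)) + of_real (w i) * (- Dt * of_real (\<sigma> * \<rho>)) + Dt * of_real (\<sigma> * w i / \<rho>) * of_real (\<rho>^2 - 1)" .
  have ring: "A + Dt' * a + b * (- Dt' * c) + Dt' * d * e = A + Dt' * (a - b*c + d*e)" for A Dt' a b c d e :: complex
    by (simp add: algebra_simps)
  have X: "of_real (\<sigma> * (w i / \<rho>)) - of_real (w i) * of_real (\<sigma> * \<rho>) + of_real (\<sigma> * w i / \<rho>) * of_real (\<rho>^2 - 1) = (0::complex)"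
  proof -
    have "\<sigma> * (w i / \<rho>) - w i * (\<sigma> * \<rho>) + \<sigma> * w i / \<rho> * (\<rho>^2 - 1) = 0"
      using \<rho>(2) by (simp add: field_simps power2_eq_square)
    then have "complex_of_real (\<sigma> * (w i / \<rho>) - w i * (\<sigma> * \<rho>) + \<sigma> * w i / \<rho> * (\<rho>^2 - 1)) = 0" by simp
    then show ?thesis by (simp only: of_real_add of_real_diff of_real_mult)
  qed
  show ?thesis using L unfolding ring X by simp
qed

lemma alg_kappa:
  fixes D :: "nat \<Rightarrow> complex" and Dt :: complex and w :: "nat \<Rightarrow> real" and \<sigma> \<rho> :: real
  assumes \<sigma>: "\<sigma>^2 = 1" and \<rho>: "\<rho> > 0"
    and E: "(\<Sum>l=1..N. D l * of_real (w l)) + Dt * of_real (\<sigma> * \<rho>) = 0"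
  shows "(\<Sum>i=1..N. (D i + Dt * of_real (\<sigma> * (w i / \<rho>))) * D i) = - Dt * Dt + (\<Sum>i=1..N. D i * D i)"
proof -
  have "(\<Sum>i=1..N. (D i + Dt * of_real (\<sigma> * (w i / \<rho>))) * D i) =
      (\<Sum>i=1..N. D i * D i) + Dt * of_real (\<sigma> / \<rho>) * (\<Sum>i=1..N. D i * of_real (w i))"
    by (simp add: sum.distrib sum_distrib_left algebra_simps)
  also have "(\<Sum>i=1..N. D i * of_real (w i)) = - Dt * of_real (\<sigma> * \<rho>)" using E by (simp add: eq_neg_iff_add_eq_0)
  also have "Dt * of_real (\<sigma> / \<rho>) * (- Dt * of_real (\<sigma> * \<rho>)) = - Dt * Dt * of_real (\<sigma>^2 * (\<rho> / \<rho>))"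
    by (simp add: algebra_simps power2_eq_square)
  finally show ?thesis using \<sigma> \<rho> by simp
qed

lemma alg_tau:
  fixes D DDd DDt :: "nat \<Rightarrow> complex" and Dt DDtt :: complex and y :: "nat \<Rightarrow> real" and \<sigma> \<rho> :: real
  assumes \<sigma>: "\<sigma>^2 = 1" and \<rho>: "\<rho> > 0"
    and E1: "(\<Sum>l=1..N. D l * of_real (y l)) + Dt * of_real (\<sigma> * \<rho>) = 0"
    and E3: "(\<Sum>l=1..N. DDt l * of_real (y l)) + DDtt * of_real (\<sigma> * \<rho>) = - Dt"
    and T: "- DDtt + (\<Sum>k=1..N. DDd k) = 0"
  shows "of_real \<rho> * (\<Sum>i=1..N. of_real (- (y i / \<rho>) / \<rho>^2) * D i + of_real (1 / \<rho>) * (DDd i + DDt i * of_real (\<sigma> * (y i / \<rho>)))) = 0"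
proof -
  have "of_real \<rho> * (\<Sum>i=1..N. of_real (- (y i / \<rho>) / \<rho>^2) * D i + of_real (1 / \<rho>) * (DDd i + DDt i * of_real (\<sigma> * (y i / \<rho>))))
     = of_real (- 1 / \<rho>^2) * (\<Sum>i=1..N. D i * of_real (y i)) + (\<Sum>i=1..N. DDd i) + of_real (\<sigma> / \<rho>) * (\<Sum>i=1..N. DDt i * of_real (y i))"
  proof -
    have h: "complex_of_real \<rho> * (of_real a * D' + of_real b * (E' + F' * of_real c)) = of_real (\<rho> * a) * D' + of_real (\<rho> * b) * E' + of_real (\<rho>*b*c) * F'"
      for a b c and D' E' F' :: complex by (simp add: algebra_simps)
    have r1: "\<rho> * (- (y i / \<rho>) / \<rho>^2) = - 1 / \<rho>^2 * y i" for i using \<rho> by (simp add: field_simps power2_eq_square)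
    have r2: "\<rho> * (1 / \<rho>) = 1" using \<rho> by simp
    have r3: "\<sigma> * (y i / \<rho>) = \<sigma> / \<rho> * y i" for i using \<rho> by (simp add: field_simps)
    have r4: "complex_of_real (a * b) * c = of_real a * (c * of_real b)" for a b and c :: complex
      by (simp add: algebra_simps)
    show ?thesis unfolding sum_distrib_left h r1 r2 r3 r4 of_real_1 mult_1
      by (simp only: sum.distrib sum_distrib_left)
  qed
  also have "(\<Sum>i=1..N. D i * of_real (y i)) = - Dt * of_real (\<sigma> * \<rho>)" using E1 by (simp add: eq_neg_iff_add_eq_0)
  also have "(\<Sum>i=1..N. DDt i * of_real (y i)) = - Dt - DDtt * of_real (\<sigma> * \<rho>)" using E3 by (simp add: algebra_simps)
  also have "(\<Sum>i=1..N. DDd i) = DDtt" using T by simp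
  finally have L: "of_real \<rho> * (\<Sum>i=1..N. of_real (- (y i / \<rho>) / \<rho>^2) * D i + of_real (1 / \<rho>) * (DDd i + DDt i * of_real (\<sigma> * (y i / \<rho>))))
     = of_real (- 1 / \<rho>^2) * (- Dt * of_real (\<sigma> * \<rho>)) + DDtt + of_real (\<sigma> / \<rho>) * (- Dt - DDtt * of_real (\<sigma> * \<rho>))" .
  have ring: "a * (- Dt' * b) + T' + c * (- Dt' - T' * b) = Dt' * (- (a * b) - c) + T' * (1 - c * b)" for a b c Dt' T' :: complex
    by (simp add: algebra_simps)
  have X1: "- (of_real (- 1 / \<rho>^2) * of_real (\<sigma> * \<rho>)) - of_real (\<sigma> / \<rho>) = (0::complex)"
  proof -
    have "- ((- 1 / \<rho>^2) * (\<sigma> * \<rho>)) - \<sigma> / \<rho> = 0" using \<rho> by (simp add: field_simps power2_eq_square)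
    then have "complex_of_real (- ((- 1 / \<rho>^2) * (\<sigma> * \<rho>)) - \<sigma> / \<rho>) = 0" by simp
    then show ?thesis by (simp only: of_real_minus of_real_diff of_real_mult)
  qed
  have X2: "1 - of_real (\<sigma> / \<rho>) * of_real (\<sigma> * \<rho>) = (0::complex)"
  proof -
    have "1 - (\<sigma> / \<rho>) * (\<sigma> * \<rho>) = 0" using \<rho> \<sigma> by (simp add: field_simps power2_eq_square)
    then have "complex_of_real (1 - (\<sigma> / \<rho>) * (\<sigma> * \<rho>)) = 0" by simp
    then show ?thesis by (simp only: of_real_1 of_real_diff of_real_mult)
  qed
  show ?thesis using L unfolding ring X1 X2 by simp
qed

locale hyp_setting = euler_setting "N+1" V F DF DDF for N V F DF DDF +
  fixes \<sigma> :: real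
  assumes \<sigma>: "\<sigma>^2 = 1"
    and kap0: "\<And>x. x \<in> V \<Longrightarrow> kapv (N+1) (\<lambda>k. DF k x) (\<lambda>k. DF k x) = 0"
    and tau0: "\<And>x. x \<in> V \<Longrightarrow> tauv (N+1) (\<lambda>k j. DDF k j x) = 0"
    and openV: "\<And>x \<gamma> \<gamma>' t. x \<in> V \<Longrightarrow> cd (N+1) \<gamma> \<gamma>' t \<Longrightarrow> \<gamma> t = x \<Longrightarrow> \<forall>s. supp_in (N+1) (\<gamma> s)
         \<Longrightarrow> eventually (\<lambda>s. \<gamma> s \<in> V) (nhds t)"
begin

definition EE :: "nat \<Rightarrow> (nat \<Rightarrow> real) \<Rightarrow> complex" where
  "EE i w = DF i (hchart N \<sigma> w) + DF (N+1) (hchart N \<sigma> w) * of_real (\<sigma> * (w i / rr N w))"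

lemma curve_dat: assumes i: "i \<in> {1..N}" and G: "dat (N+1) G D (hchart N \<sigma> w)"
  shows "((\<lambda>u. G (hchart N \<sigma> (w(i:=u)))) has_vector_derivative D i + D (N+1) * of_real (\<sigma> * (w i / rr N w))) (at (w i))"
proof -
  have c: "cd (N+1) (\<lambda>u. hchart N \<sigma> (w(i:=u))) (hv N \<sigma> w i) (w i)" by (rule cd_hchart'[OF i])
  have e: "(\<lambda>u. hchart N \<sigma> (w(i:=u))) (w i) = hchart N \<sigma> w" by simp
  have "((\<lambda>u. G (hchart N \<sigma> (w(i:=u)))) has_vector_derivative (\<Sum>l=1..N+1. D l * of_real (hv N \<sigma> w i l))) (at (w i))"
    using G[unfolded dat_def, rule_format, OF c e] .
  then show ?thesis using sum_hv[OF i] by simp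
qed

lemma pdA: assumes X: "hchart N \<sigma> w \<in> V" and i: "i \<in> {1..N}"
  shows "((\<lambda>u. (F \<circ> hchart N \<sigma>) (w(i:=u))) has_vector_derivative EE i w) (at (w i))"
proof -
  have "dat (N+1) F (\<lambda>k. DF k (hchart N \<sigma> w)) (hchart N \<sigma> w)" using C X by (simp add: C2_def)
  from curve_dat[OF i this] show ?thesis by (simp add: EE_def o_def)
qed

lemma pdA_eq: "hchart N \<sigma> w \<in> V \<Longrightarrow> i \<in> {1..N} \<Longrightarrow> pd i (F \<circ> hchart N \<sigma>) w = EE i w"
  unfolding pd_def by (rule vector_derivative_at, rule pdA)

lemma pdA_has: "hchart N \<sigma> w \<in> V \<Longrightarrow> i \<in> {1..N} \<Longrightarrow> has_pd i (F \<circ> hchart N \<sigma>) w"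
  unfolding has_pd_def by (rule differentiableI_vector, rule pdA)

lemma evA: assumes X: "hchart N \<sigma> y \<in> V" and i: "i \<in> {1..N}"
  shows "eventually (\<lambda>u. hchart N \<sigma> (y(i:=u)) \<in> V) (nhds (y i))"
  by (rule openV[OF X cd_hchart'[OF i]]) (simp_all add: supp_hchart[of N \<sigma>, simplified])

lemma hchart_coord: "l \<in> {1..N} \<Longrightarrow> hchart N \<sigma> w l = w l" by (simp add: hchart_def)
lemma hchart_last: "hchart N \<sigma> w (N+1) = \<sigma> * rr N w" by (simp add: hchart_rr)

lemma sum_last: "(\<Sum>l=1..N+1. g l) = (\<Sum>l=1..N. g l) + (g (N+1) :: complex)" by simp

lemma EulerA: assumes X: "hchart N \<sigma> w \<in> V"
  shows "(\<Sum>l=1..N. DF l (hchart N \<sigma> w) * of_real (w l)) + DF (N+1) (hchart N \<sigma> w) * of_real (\<sigma> * rr N w) = 0"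
proof -
  have "(\<Sum>l=1..N+1. DF l (hchart N \<sigma> w) * of_real (hchart N \<sigma> w l)) = 0" by (rule E1[OF X])
  moreover have "(\<Sum>l=1..N. DF l (hchart N \<sigma> w) * of_real (hchart N \<sigma> w l)) = (\<Sum>l=1..N. DF l (hchart N \<sigma> w) * of_real (w l))"
    by (rule sum.cong) (auto simp: hchart_coord)
  ultimately show ?thesis unfolding sum_last hchart_last by simp
qed

lemma EulerB: assumes X: "hchart N \<sigma> w \<in> V"
  shows "(\<Sum>l=1..N. DDF l (N+1) (hchart N \<sigma> w) * of_real (w l)) + DDF (N+1) (N+1) (hchart N \<sigma> w) * of_real (\<sigma> * rr N w)
     = - DF (N+1) (hchart N \<sigma> w)"
proof -
  have s: "DDF l (N+1) (hchart N \<sigma> w) = DDF (N+1) l (hchart N \<sigma> w)" for l using C X unfolding C2_def by blast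
  have "(\<Sum>l=1..N+1. DDF (N+1) l (hchart N \<sigma> w) * of_real (hchart N \<sigma> w l)) = - DF (N+1) (hchart N \<sigma> w)"
    by (rule E3[OF X]) auto
  moreover have "(\<Sum>l=1..N. DDF (N+1) l (hchart N \<sigma> w) * of_real (hchart N \<sigma> w l)) = (\<Sum>l=1..N. DDF l (N+1) (hchart N \<sigma> w) * of_real (w l))"
  proof (rule sum.cong)
    fix l assume l: "l \<in> {1..N}"
    show "DDF (N+1) l (hchart N \<sigma> w) * of_real (hchart N \<sigma> w l) = DDF l (N+1) (hchart N \<sigma> w) * of_real (w l)"
      using s[of l] hchart_coord[OF l] by simp
  qed simp
  ultimately show ?thesis unfolding sum_last hchart_last by simp
qed

lemma metricA: assumes X: "hchart N \<sigma> w \<in> V" and i: "i \<in> {1..N}"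
  shows "(\<Sum>j=1..N. of_real (hmetric_inv N w i j) * EE j w) = DF i (hchart N \<sigma> w)"
  unfolding hmetric_inv_def EE_def
  by (rule alg_metric[OF rr_sq rr_pos EulerA[OF X] i])

end

context hyp_setting begin

lemma ddiff: assumes X: "hchart N \<sigma> y \<in> V" and k: "k \<in> {1..N}" and j: "j \<in> {1..N}"
  shows "\<exists>D'. ((\<lambda>u. EE k (y(j:=u))) has_vector_derivative D') (at (y j))"
proof -
  have dk: "dat (N+1) (DF k) (\<lambda>l. DDF k l (hchart N \<sigma> y)) (hchart N \<sigma> y)" using C X unfolding C2_def by blast
  have dt: "dat (N+1) (DF (N+1)) (\<lambda>l. DDF (N+1) l (hchart N \<sigma> y)) (hchart N \<sigma> y)" using C X unfolding C2_def by blast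
  note a = curve_dat[OF j dk]
  note b = curve_dat[OF j dt]
  have k1: "((\<lambda>u. (y(j:=u)) k) has_real_derivative (if k = j then 1 else 0)) (at (y j))"
    by (cases "k = j") auto
  have nz: "rr N (y(j := y j)) \<noteq> 0" using rr_pos[of N "y(j := y j)"] by simp
  note q = DERIV_divide[OF k1 rr_deriv[OF j] nz]
  note c = has_vector_derivative_of_real[OF DERIV_cmult[OF q, of \<sigma>]]
  note s = has_vector_derivative_add[OF a has_vector_derivative_mult[OF b c]]
  show ?thesis unfolding EE_def using s by blast
qed

lemma twiceA: assumes X: "hchart N \<sigma> y \<in> V"
  shows "twice_pd N (F \<circ> hchart N \<sigma>) y"
  unfolding twice_pd_def
proof (intro ballI conjI)
  fix k j assume k: "k \<in> {1..N}" and j: "j \<in> {1..N}"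
  show "has_pd k (F \<circ> hchart N \<sigma>) y" by (rule pdA_has[OF X k])
  obtain D' where d: "((\<lambda>u. EE k (y(j:=u))) has_vector_derivative D') (at (y j))" using ddiff[OF X k j] by blast
  obtain e where e: "e > 0" "\<And>u. dist u (y j) < e \<Longrightarrow> hchart N \<sigma> (y(j:=u)) \<in> V"
    using evA[OF X j] unfolding eventually_nhds_metric by blast
  have "((\<lambda>u. pd k (F \<circ> hchart N \<sigma>) (y(j:=u))) has_vector_derivative D') (at (y j))"
  proof (rule hvd_transform[OF d e(1)])
    fix u assume "dist u (y j) < e"
    then show "EE k (y(j:=u)) = pd k (F \<circ> hchart N \<sigma>) (y(j:=u))" using pdA_eq[OF e(2) k] by simp
  qed
  then show "has_pd j (pd k (F \<circ> hchart N \<sigma>)) y" unfolding has_pd_def by (rule differentiableI_vector)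
qed

lemma hsqrtdet_rr: "hsqrtdet N w = 1 / rr N w" by (simp add: hsqrtdet_def rr_def)

lemma Tform: assumes X: "hchart N \<sigma> w \<in> V" and i: "i \<in> {1..N}"
  shows "complex_of_real (hsqrtdet N w) * (\<Sum>j=1..N. complex_of_real (hmetric_inv N w i j) * pd j (F \<circ> hchart N \<sigma>) w)
     = of_real (1 / rr N w) * DF i (hchart N \<sigma> w)"
proof -
  have "(\<Sum>j=1..N. complex_of_real (hmetric_inv N w i j) * pd j (F \<circ> hchart N \<sigma>) w) = (\<Sum>j=1..N. of_real (hmetric_inv N w i j) * EE j w)"
    by (rule sum.cong) (auto simp: pdA_eq[OF X])
  then show ?thesis using metricA[OF X i] by (simp add: hsqrtdet_rr)
qed

lemma pdT: assumes X: "hchart N \<sigma> y \<in> V" and i: "i \<in> {1..N}"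
  shows "pd i (\<lambda>w. complex_of_real (hsqrtdet N w) * (\<Sum>j=1..N. complex_of_real (hmetric_inv N w i j) * pd j (F \<circ> hchart N \<sigma>) w)) y
    = of_real (- (y i / rr N y) / (rr N y)^2) * DF i (hchart N \<sigma> y)
      + of_real (1 / rr N y) * (DDF i i (hchart N \<sigma> y) + DDF i (N+1) (hchart N \<sigma> y) * of_real (\<sigma> * (y i / rr N y)))"
proof -
  have di: "dat (N+1) (DF i) (\<lambda>l. DDF i l (hchart N \<sigma> y)) (hchart N \<sigma> y)" using C X unfolding C2_def by blast
  have a: "((\<lambda>u. DF i (hchart N \<sigma> (y(i:=u)))) has_vector_derivative
      DDF i i (hchart N \<sigma> y) + DDF i (N+1) (hchart N \<sigma> y) * of_real (\<sigma> * (y i / rr N y))) (at (y i))"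
    by (rule curve_dat[OF i di])
  have nz: "rr N (y(i := y i)) \<noteq> 0" using rr_pos[of N "y(i := y i)"] by simp
  have r0: "((\<lambda>u. 1 / rr N (y(i:=u))) has_real_derivative ((0 * rr N (y(i := y i)) - 1 * (y i / rr N y)) / (rr N (y(i := y i)) * rr N (y(i := y i))))) (at (y i))"
    by (rule DERIV_divide[OF DERIV_const rr_deriv[OF i] nz])
  have r: "((\<lambda>u. 1 / rr N (y(i:=u))) has_real_derivative (- (y i / rr N y) / (rr N y)^2)) (at (y i))"
    using r0 by (simp add: power2_eq_square)
  have b: "((\<lambda>u. complex_of_real (1 / rr N (y(i:=u))) * DF i (hchart N \<sigma> (y(i:=u)))) has_vector_derivative
      of_real (1 / rr N y) * (DDF i i (hchart N \<sigma> y) + DDF i (N+1) (hchart N \<sigma> y) * of_real (\<sigma> * (y i / rr N y)))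
      + of_real (- (y i / rr N y) / (rr N y)^2) * DF i (hchart N \<sigma> y)) (at (y i))"
    using has_vector_derivative_mult[OF has_vector_derivative_of_real[OF r] a] by simp
  obtain e where e: "e > 0" "\<And>u. dist u (y i) < e \<Longrightarrow> hchart N \<sigma> (y(i:=u)) \<in> V"
    using evA[OF X i] unfolding eventually_nhds_metric by blast
  have "((\<lambda>u. complex_of_real (hsqrtdet N (y(i:=u))) * (\<Sum>j=1..N. complex_of_real (hmetric_inv N (y(i:=u)) i j) * pd j (F \<circ> hchart N \<sigma>) (y(i:=u))))
      has_vector_derivative
      of_real (1 / rr N y) * (DDF i i (hchart N \<sigma> y) + DDF i (N+1) (hchart N \<sigma> y) * of_real (\<sigma> * (y i / rr N y)))
      + of_real (- (y i / rr N y) / (rr N y)^2) * DF i (hchart N \<sigma> y)) (at (y i))"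
  proof (rule hvd_transform[OF b e(1)])
    fix u assume "dist u (y i) < e"
    then show "complex_of_real (1 / rr N (y(i:=u))) * DF i (hchart N \<sigma> (y(i:=u))) =
       complex_of_real (hsqrtdet N (y(i:=u))) * (\<Sum>j=1..N. complex_of_real (hmetric_inv N (y(i:=u)) i j) * pd j (F \<circ> hchart N \<sigma>) (y(i:=u)))"
      using Tform[OF e(2) i] by simp
  qed
  then show ?thesis unfolding pd_def by (subst vector_derivative_at) (auto simp: add.commute)
qed

lemma tauA: assumes X: "hchart N \<sigma> y \<in> V"
  shows "tauH N (F \<circ> hchart N \<sigma>) y = 0"
proof -
  let ?X = "hchart N \<sigma> y" and ?\<rho> = "rr N y"
  have "tauH N (F \<circ> hchart N \<sigma>) y = of_real ?\<rho> * (\<Sum>i=1..N. of_real (- (y i / ?\<rho>) / ?\<rho>^2) * DF i ?X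
      + of_real (1 / ?\<rho>) * (DDF i i ?X + DDF i (N+1) ?X * of_real (\<sigma> * (y i / ?\<rho>))))"
    unfolding tauH_def using pdT[OF X] by (simp add: hsqrtdet_rr)
  also have "\<dots> = 0"
  proof (rule alg_tau[OF \<sigma> rr_pos EulerA[OF X] EulerB[OF X]])
    have "tauv (N+1) (\<lambda>k j. DDF k j ?X) = 0" by (rule tau0[OF X])
    then show "- DDF (N+1) (N+1) ?X + (\<Sum>k=1..N. DDF k k ?X) = 0" by (simp add: tauv_def)
  qed
  finally show ?thesis .
qed

lemma kappaA: assumes X: "hchart N \<sigma> y \<in> V"
  shows "kappaH N (F \<circ> hchart N \<sigma>) (F \<circ> hchart N \<sigma>) y = 0"
proof -
  let ?X = "hchart N \<sigma> y" and ?h = "F \<circ> hchart N \<sigma>"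
  have "kappaH N ?h ?h y = (\<Sum>i=1..N. pd i ?h y * (\<Sum>j=1..N. of_real (hmetric_inv N y i j) * pd j ?h y))"
    unfolding kappaH_def by (simp add: sum_distrib_left mult_ac)
  also have "\<dots> = (\<Sum>i=1..N. EE i y * DF i ?X)"
  proof (rule sum.cong)
    fix i assume i: "i \<in> {1..N}"
    have "(\<Sum>j=1..N. of_real (hmetric_inv N y i j) * pd j ?h y) = (\<Sum>j=1..N. of_real (hmetric_inv N y i j) * EE j y)"
      by (rule sum.cong) (auto simp: pdA_eq[OF X])
    then show "pd i ?h y * (\<Sum>j=1..N. of_real (hmetric_inv N y i j) * pd j ?h y) = EE i y * DF i ?X"
      using metricA[OF X i] pdA_eq[OF X i] by simp
  qed simp
  also have "\<dots> = - DF (N+1) ?X * DF (N+1) ?X + (\<Sum>i=1..N. DF i ?X * DF i ?X)"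
    unfolding EE_def by (rule alg_kappa[OF \<sigma> rr_pos EulerA[OF X]])
  also have "\<dots> = 0" using kap0[OF X] by (simp add: kapv_def)
  finally show ?thesis .
qed

end

lemma pistar_smul: "pistar m x = smul (1 / sqrt (- lor m x x)) x"
  by (simp add: pistar_def smul_def fun_eq_iff)

lemma pistar_props: assumes x: "x \<in> Vset n d a cQ"
  shows "pistar (2*n+3) x \<in> Vset n d a cQ \<inter> Hset (2*n+3) \<and> PhiHat n d a cP cQ (pistar (2*n+3) x) = PhiHat n d a cP cQ x"
proof -
  let ?m = "2*n+3"
  have l: "lor ?m x x < 0" and s: "supp_in ?m x" using x by (auto simp: Vset_def Uset_def)
  define c where "c = 1 / sqrt (- lor ?m x x)"
  have c: "c > 0" using l by (simp add: c_def)
  have p: "pistar ?m x = smul c x" by (simp add: pistar_smul c_def)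
  have "lor ?m (smul c x) (smul c x) = c^2 * lor ?m x x" by (rule lor_smul)
  also have "c^2 = 1 / (- lor ?m x x)" using l by (simp add: c_def power_divide)
  finally have "lor ?m (smul c x) (smul c x) = -1" using l by (simp add: field_simps)
  moreover have "supp_in ?m (smul c x)" using s by (simp add: supp_in_def smul_def)
  ultimately show ?thesis unfolding p using Vset_smul[OF c x] PhiHat_smul[OF c] by (simp add: Hset_def)
qed

lemma zn_nonzero: assumes n: "n \<ge> 1" and x: "x \<in> Uset (2*n+3)"
  shows "zmap n x n \<noteq> 0"
proof -
  let ?m = "2*n+3"
  have l: "- (x ?m * x ?m) + (\<Sum>k=1..?m-1. x k * x k) < 0" using x by (simp add: Uset_def lor_def)
  have "x (2*n+2) * x (2*n+2) \<le> (\<Sum>k=1..?m-1. x k * x k)"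
    by (rule member_le_sum) auto
  then have "x (2*n+2) * x (2*n+2) < x ?m * x ?m" using l by simp
  then have ne: "x (2*n+2) \<noteq> x (2*n+3)" by auto
  have "\<not> (n \<le> n - 1)" using n by arith
  then show ?thesis using ne by (simp add: zmap_def)
qed

theorem mainTheorem4:
  fixes n d :: nat and a :: "nat \<Rightarrow> nat \<Rightarrow> complex"
    and cP cQ :: "(nat \<Rightarrow> nat) \<Rightarrow> complex"
  assumes "n \<ge> 1" and "d \<ge> 1"
    and "\<forall>x. tauE 3 (quad3 a) x = 0"
    and "\<forall>x. kappaE 3 (quad3 a) (quad3 a) x = 0"
    and "\<forall>u v. (\<forall>z. u * hpoly n d cP z + v * hpoly n d cQ z = 0) \<longrightarrow> u = 0 \<and> v = 0"
  shows "harmonic_morphism_L (2*n+3) (Vset n d a cQ) (PhiHat n d a cP cQ)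
    \<and> (\<forall>x\<in>Vset n d a cQ. \<forall>c::real. c > 0 \<longrightarrow>
          (\<lambda>k. c * x k) \<in> Vset n d a cQ \<and> PhiHat n d a cP cQ (\<lambda>k. c * x k) = PhiHat n d a cP cQ x)
    \<and> (\<forall>x\<in>Vset n d a cQ. pistar (2*n+3) x \<in> Vset n d a cQ \<inter> Hset (2*n+3)
          \<and> PhiHat n d a cP cQ (pistar (2*n+3) x) = PhiHat n d a cP cQ x)
    \<and> harmonic_morphism_H (2*n+2) (pistar (2*n+3) ` Vset n d a cQ) (PhiHat n d a cP cQ)
    \<and> (even d \<and> (\<forall>z. hpoly n d cQ z = z n ^ d) \<longrightarrow>
          (\<forall>x\<in>Uset (2*n+3). hpoly n d cQ (zmap n x) \<noteq> 0)
          \<and> Vset n d a cQ = Uset (2*n+3)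
          \<and> pistar (2*n+3) ` Vset n d a cQ = Hset (2*n+3))"
proof -
  let ?V = "Vset n d a cQ" and ?F = "PhiHat n d a cP cQ" and ?m = "2*n+3" and ?N = "2*n+2"
  have n: "n \<ge> 1" by (rule assms(1))
  obtain DF DDF where H: "HMF ?m ?V ?F DF DDF" using F_data[OF n assms(3,4)] by blast
  have P1: "harmonic_morphism_L ?m ?V ?F" by (rule part1[OF n H])
  have P2: "\<forall>x\<in>?V. \<forall>c::real. c > 0 \<longrightarrow> (\<lambda>k. c * x k) \<in> ?V \<and> ?F (\<lambda>k. c * x k) = ?F x"
    using Vset_smul PhiHat_smul unfolding smul_def by blast
  have P3: "\<forall>x\<in>?V. pistar ?m x \<in> ?V \<inter> Hset ?m \<and> ?F (pistar ?m x) = ?F x"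
    using pistar_props by blast
  have mN: "?m = ?N + 1" by simp
  have P4: "harmonic_morphism_H ?N (pistar ?m ` ?V) ?F"
    unfolding harmonic_morphism_H_def
  proof (intro ballI allI impI)
    fix \<sigma> :: real and y assume s: "\<sigma> \<in> {1, -1}" and y: "supp_in ?N y \<and> hchart ?N \<sigma> y \<in> pistar ?m ` ?V"
    from y obtain x where x: "x \<in> ?V" "hchart ?N \<sigma> y = pistar ?m x" by blast
    have X: "hchart ?N \<sigma> y \<in> ?V" using x P3 by auto
    have C: "C2 (?N+1) ?V ?F DF DDF" using H unfolding HMF_def mN by blast
    interpret hyp_setting ?N ?V ?F DF DDF \<sigma>
    proof
      show "C2 (?N+1) ?V ?F DF DDF" by (rule C)
      show "\<And>x c. x \<in> ?V \<Longrightarrow> 0 < c \<Longrightarrow> smul c x \<in> ?V" by (rule Vset_smul)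
      show "\<And>x c. 0 < c \<Longrightarrow> ?F (smul c x) = ?F x" by (rule PhiHat_smul)
      show "\<sigma>^2 = 1" using s by auto
      show "\<And>x. x \<in> ?V \<Longrightarrow> kapv (?N+1) (\<lambda>k. DF k x) (\<lambda>k. DF k x) = 0"
        using H mN by (simp add: HMF_def)
      show "\<And>x. x \<in> ?V \<Longrightarrow> tauv (?N+1) (\<lambda>k j. DDF k j x) = 0"
        using H mN by (simp add: HMF_def)
      show "\<And>x \<gamma> \<gamma>' t. x \<in> ?V \<Longrightarrow> cd (?N+1) \<gamma> \<gamma>' t \<Longrightarrow> \<gamma> t = x \<Longrightarrow> \<forall>s. supp_in (?N+1) (\<gamma> s)
         \<Longrightarrow> eventually (\<lambda>s. \<gamma> s \<in> ?V) (nhds t)"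
        using Vset_ev[OF n] mN by simp
    qed
    show "twice_pd ?N (?F \<circ> hchart ?N \<sigma>) y \<and> tauH ?N (?F \<circ> hchart ?N \<sigma>) y = 0 \<and>
        kappaH ?N (?F \<circ> hchart ?N \<sigma>) (?F \<circ> hchart ?N \<sigma>) y = 0"
      using twiceA[OF X] tauA[OF X] kappaA[OF X] by blast
  qed
  have P5: "even d \<and> (\<forall>z. hpoly n d cQ z = z n ^ d) \<longrightarrow>
          (\<forall>x\<in>Uset ?m. hpoly n d cQ (zmap n x) \<noteq> 0) \<and> ?V = Uset ?m \<and> pistar ?m ` ?V = Hset ?m"
  proof (intro impI)
    assume e: "even d \<and> (\<forall>z. hpoly n d cQ z = z n ^ d)"
    have Q: "\<forall>x\<in>Uset ?m. hpoly n d cQ (zmap n x) \<noteq> 0" using e zn_nonzero[OF n] by simp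
    have VU: "?V = Uset ?m" using Q e by (auto simp: Vset_def)
    have "pistar ?m ` ?V = Hset ?m"
    proof
      show "pistar ?m ` ?V \<subseteq> Hset ?m" using P3 by blast
      show "Hset ?m \<subseteq> pistar ?m ` ?V"
      proof
        fix y assume y: "y \<in> Hset ?m"
        then have yU: "y \<in> ?V" unfolding VU by (simp add: Hset_def Uset_def)
        have "pistar ?m y = y" using y by (simp add: Hset_def pistar_def)
        then show "y \<in> pistar ?m ` ?V" using yU by force
      qed
    qed
    then show "(\<forall>x\<in>Uset ?m. hpoly n d cQ (zmap n x) \<noteq> 0) \<and> ?V = Uset ?m \<and> pistar ?m ` ?V = Hset ?m"
      using Q VU by blast
  qed
  show ?thesis using P1 P2 P3 P4 P5 by blast
qed

end
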